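(* Let $n \ge 1$, $0 \le k \le n$, $0 \le \ell \le n-k$, $k \le m \le n-\ell$ be integers. For $1\le i\le n+1$ let $T(n;i,k,\ell,m)$ denote the number of rooted trees on the vertex set $[n+1]=\{1,\ldots,n+1\}$ in which the root is $i$, the root has exactly $k$ children smaller than $i$ and exactly $\ell$ children larger than $i$, and the subtrees hanging from the children smaller than $i$ contain in total $m$ vertices (so the subtrees hanging from the children larger than $i$ contain in total $n-m$ vertices). Then $$\sum_{i=1}^{n+1} T(n;i,k,\ell,m) \;=\; \binom{n+1}{k+\ell+1}\binom{n-k-\ell}{m-k}\,\phi_{m,k}\,\phi_{n-m,\ell},$$ where for integers $M,j\ge 0$, $$\phi_{M,j} = \begin{cases} 1 & \text{if } M=j=0,\\ j\,M^{M-j-1} & \text{if } M\ge 1 \text{ and } 0\le j\le M,\\ 0 & \text{if } j>M.\end{cases}$$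
   Context: A rooted tree on a vertex set $V$ is a tree with vertex set $V$ together with a distinguished vertex (the root). Removing the root from a rooted tree leaves a forest of rooted trees whose roots are the children of the root; the "subtrees hanging from" a set of children are the components of this forest rooted at those children. Vertices are compared by their integer labels. ($\phi_{M,j}$ is the number of rooted forests on $M$ labeled vertices with $j$ specified roots.) *)

theory Defs
  imports Complex_Main
begin

definition adj :: "nat set set \<Rightarrow> nat \<Rightarrow> nat \<Rightarrow> bool" where
  "adj E a b \<longleftrightarrow> a \<noteq> b \<and> {a, b} \<in> E"

definition is_graph :: "nat set \<Rightarrow> nat set set \<Rightarrow> bool" where
  "is_graph V E \<longleftrightarrow> (\<forall>e\<in>E. \<exists>a b. a \<noteq> b \<and> a \<in> V \<and> b \<in> V \<and> e = {a, b})"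

definition connected_graph :: "nat set \<Rightarrow> nat set set \<Rightarrow> bool" where
  "connected_graph V E \<longleftrightarrow> (\<forall>u\<in>V. \<forall>v\<in>V. (adj E)\<^sup>*\<^sup>* u v)"

text \<open>Acyclic: no edge lies on a cycle, i.e. the endpoints of any edge are
  not connected once that edge is removed.\<close>
definition acyclic_graph :: "nat set set \<Rightarrow> bool" where
  "acyclic_graph E \<longleftrightarrow> (\<forall>a b. a \<noteq> b \<and> {a, b} \<in> E \<longrightarrow> \<not> (adj (E - {{a, b}}))\<^sup>*\<^sup>* a b)"

definition is_tree :: "nat set \<Rightarrow> nat set set \<Rightarrow> bool" where
  "is_tree V E \<longleftrightarrow> is_graph V E \<and> connected_graph V E \<and> acyclic_graph E"

definition children :: "nat set set \<Rightarrow> nat \<Rightarrow> nat set" where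
  "children E r = {c. adj E r c}"

definition hanging_vertices :: "nat set set \<Rightarrow> nat \<Rightarrow> nat set \<Rightarrow> nat set" where
  "hanging_vertices E r C = {v. \<exists>c\<in>C. (adj {e\<in>E. r \<notin> e})\<^sup>*\<^sup>* c v}"

text \<open>T(n;i,k,l,m): rooted trees on [n+1] with root i (a rooted tree with root i is
  identified with its edge set).\<close>
definition T :: "nat \<Rightarrow> nat \<Rightarrow> nat \<Rightarrow> nat \<Rightarrow> nat \<Rightarrow> nat" where
  "T n i k l m = card {E. is_tree {1..n+1} E
      \<and> card {c\<in>children E i. c < i} = k
      \<and> card {c\<in>children E i. c > i} = l
      \<and> card (hanging_vertices E i {c\<in>children E i. c < i}) = m}"

definition phi :: "nat \<Rightarrow> nat \<Rightarrow> real" where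
  "phi M j = (if M = 0 \<and> j = 0 then 1
              else if 1 \<le> M \<and> j \<le> M then real j * (real M) powi (int M - int j - 1)
              else 0)"

end

theory Submission
  imports Defs
begin

lemma adj_sym: "adj E a b = adj E b a"
  unfolding adj_def by (auto simp: insert_commute)

lemma rtranclp_adj_sym: "(adj E)\<^sup>*\<^sup>* a b \<Longrightarrow> (adj E)\<^sup>*\<^sup>* b a"
proof (induction rule: rtranclp_induct)
  case base then show ?case by simp
next
  case (step y z)
  then show ?case by (meson adj_sym converse_rtranclp_into_rtranclp)
qed

lemma adj_mono: "E \<subseteq> E' \<Longrightarrow> adj E a b \<Longrightarrow> adj E' a b"
  unfolding adj_def by auto

lemma rtranclp_adj_mono: "E \<subseteq> E' \<Longrightarrow> (adj E)\<^sup>*\<^sup>* a b \<Longrightarrow> (adj E')\<^sup>*\<^sup>* a b"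
  by (metis adj_mono mono_rtranclp)

lemma rtranclp_hom:
  assumes "\<And>u w. R u w \<Longrightarrow> S\<^sup>*\<^sup>* (f u) (f w)"
  shows "R\<^sup>*\<^sup>* a b \<Longrightarrow> S\<^sup>*\<^sup>* (f a) (f b)"
proof (induction rule: rtranclp_induct)
  case base then show ?case by simp
next
  case (step y z) then show ?case using assms by (meson rtranclp_trans)
qed

lemma rtranclp_closed:
  assumes "\<And>u w. R u w \<Longrightarrow> u \<in> Z \<Longrightarrow> w \<in> Z"
  shows "R\<^sup>*\<^sup>* a b \<Longrightarrow> a \<in> Z \<Longrightarrow> b \<in> Z"
proof (induction rule: rtranclp_induct)
  case base then show ?case by simp
next
  case (step y z) then show ?case using assms by blast
qed

lemma acyclic_mono: "acyclic_graph E \<Longrightarrow> E' \<subseteq> E \<Longrightarrow> acyclic_graph E'"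
  unfolding acyclic_graph_def
  by (meson Diff_mono order_refl rtranclp_adj_mono subsetD)

lemma is_graph_edge: "is_graph V E \<Longrightarrow> e \<in> E \<Longrightarrow> \<exists>a b. a \<noteq> b \<and> a \<in> V \<and> b \<in> V \<and> e = {a, b}"
  unfolding is_graph_def by blast

lemma adj_in_V: "is_graph V E \<Longrightarrow> adj E a b \<Longrightarrow> a \<in> V \<and> b \<in> V"
  unfolding adj_def is_graph_def by (auto simp: doubleton_eq_iff)

lemma rtranclp_in_V: "is_graph V E \<Longrightarrow> (adj E)\<^sup>*\<^sup>* a b \<Longrightarrow> a \<in> V \<Longrightarrow> b \<in> V"
  using rtranclp_closed[of "adj E" V a b] adj_in_V by blast

lemma edges_subset_Pow: "is_graph V E \<Longrightarrow> E \<subseteq> Pow V"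
  unfolding is_graph_def by auto

abbreviation avoid :: "nat set set \<Rightarrow> nat \<Rightarrow> nat set set" where
  "avoid E x \<equiv> {e\<in>E. x \<notin> e}"

lemma avoid_not_reach: "(adj (avoid E x))\<^sup>*\<^sup>* c v \<Longrightarrow> c \<noteq> x \<Longrightarrow> v \<noteq> x"
  using rtranclp_closed[of "adj (avoid E x)" "-{x}" c v] unfolding adj_def by auto

lemma x_notin_hanging: "x \<notin> C \<Longrightarrow> x \<notin> hanging_vertices E x C"
  unfolding hanging_vertices_def using avoid_not_reach by blast

lemma no_cycle_children:
  assumes ac: "acyclic_graph E" and xc: "adj E x c" and xc': "adj E x c'"
    and p: "(adj (avoid E x))\<^sup>*\<^sup>* c' c"
  shows "c = c'"
proof (rule ccontr)
  assume ne: "c \<noteq> c'"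
  have "(adj (avoid E x))\<^sup>*\<^sup>* c' c" by fact
  then have p2: "(adj (E - {{x,c}}))\<^sup>*\<^sup>* c' c"
    by (rule rtranclp_adj_mono[rotated]) auto
  have "adj (E - {{x,c}}) x c'" using xc' ne xc unfolding adj_def by (auto simp: doubleton_eq_iff)
  with p2 have "(adj (E - {{x,c}}))\<^sup>*\<^sup>* x c" by (meson converse_rtranclp_into_rtranclp)
  moreover have "x \<noteq> c" "{x,c} \<in> E" using xc unfolding adj_def by auto
  ultimately show False using ac unfolding acyclic_graph_def by blast
qed

lemma reach_via_children:
  assumes "(adj E)\<^sup>*\<^sup>* x v"
  shows "v = x \<or> (\<exists>c\<in>children E x. (adj (avoid E x))\<^sup>*\<^sup>* c v)"
  using assms
proof (induction rule: rtranclp_induct)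
  case base then show ?case by simp
next
  case (step y z)
  show ?case
  proof (cases "z = x")
    case True then show ?thesis by simp
  next
    case zx: False
    show ?thesis
    proof (cases "y = x")
      case True
      then have "z \<in> children E x" using step(2) unfolding children_def by simp
      then show ?thesis by blast
    next
      case False
      with step(3) obtain c where c: "c\<in>children E x" "(adj (avoid E x))\<^sup>*\<^sup>* c y" by blast
      have "adj (avoid E x) y z" using step(2) False zx unfolding adj_def by auto
      with c show ?thesis by (meson rtranclp.rtrancl_into_rtrancl)
    qed
  qed
qed

lemma hanging_all:
  assumes "connected_graph V E" "x \<in> V" "v \<in> V" "v \<noteq> x"
  shows "v \<in> hanging_vertices E x (children E x)"
  using reach_via_children[of E x v] assms unfolding connected_graph_def hanging_vertices_def
  by blast

lemma connected_via:
  assumes "x \<in> V" "\<And>v. v \<in> V \<Longrightarrow> (adj E)\<^sup>*\<^sup>* v x"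
  shows "connected_graph V E"
  unfolding connected_graph_def
  using assms by (meson rtranclp_adj_sym rtranclp_trans)

lemma children_union: "children (E1 \<union> E2) x = children E1 x \<union> children E2 x"
  unfolding children_def adj_def by auto

lemma acyclic_glue1:
  assumes g1: "is_graph V1 E1" and g2: "is_graph V2 E2" and ac: "acyclic_graph E1"
    and int: "V1 \<inter> V2 \<subseteq> {x}" and x1: "x \<in> V1"
    and ab: "{a,b} \<in> E1" "a \<noteq> b"
    and p: "(adj ((E1 \<union> E2) - {{a,b}}))\<^sup>*\<^sup>* a b"
  shows False
proof -
  define \<pi> where "\<pi> v = (if v \<in> V1 then v else x)" for v
  have step: "(adj (E1 - {{a,b}}))\<^sup>*\<^sup>* (\<pi> u) (\<pi> w)" if "adj ((E1 \<union> E2) - {{a,b}}) u w" for u w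
  proof (cases "{u,w} \<in> E1")
    case True
    then have "adj E1 u w" using that unfolding adj_def by auto
    then have "u \<in> V1" "w \<in> V1" using adj_in_V[OF g1] by auto
    moreover have "adj (E1 - {{a,b}}) u w" using that True unfolding adj_def by auto
    ultimately show ?thesis unfolding \<pi>_def by simp
  next
    case False
    then have "adj E2 u w" using that unfolding adj_def by auto
    then have "u \<in> V2" "w \<in> V2" using adj_in_V[OF g2] by auto
    then have "\<pi> u = x" "\<pi> w = x" using int unfolding \<pi>_def by auto
    then show ?thesis by simp
  qed
  have "(adj (E1 - {{a,b}}))\<^sup>*\<^sup>* (\<pi> a) (\<pi> b)"
    using rtranclp_hom[of "adj ((E1 \<union> E2) - {{a,b}})" "adj (E1 - {{a,b}})" \<pi>, OF step p] .
  moreover have "a \<in> V1" "b \<in> V1" using is_graph_edge[OF g1 ab(1)] by (auto simp: doubleton_eq_iff)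
  ultimately have "(adj (E1 - {{a,b}}))\<^sup>*\<^sup>* a b" unfolding \<pi>_def by simp
  then show False using ac ab unfolding acyclic_graph_def by blast
qed

lemma acyclic_glue:
  assumes g1: "is_graph V1 E1" and g2: "is_graph V2 E2" and ac1: "acyclic_graph E1"
    and ac2: "acyclic_graph E2"
    and int: "V1 \<inter> V2 \<subseteq> {x}" and x1: "x \<in> V1" and x2: "x \<in> V2"
  shows "acyclic_graph (E1 \<union> E2)"
  unfolding acyclic_graph_def
proof (intro allI impI notI)
  fix a b assume ab: "a \<noteq> b \<and> {a, b} \<in> E1 \<union> E2" and p: "(adj (E1 \<union> E2 - {{a, b}}))\<^sup>*\<^sup>* a b"
  show False
  proof (cases "{a,b} \<in> E1")
    case True
    then show ?thesis using acyclic_glue1[OF g1 g2 ac1 int x1 True] ab p by blast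
  next
    case False
    then have "{a,b} \<in> E2" using ab by blast
    moreover have "V2 \<inter> V1 \<subseteq> {x}" using int by blast
    moreover have "E2 \<union> E1 = E1 \<union> E2" by blast
    ultimately show ?thesis using acyclic_glue1[OF g2 g1 ac2 _ x2] ab p by metis
  qed
qed

definition tset :: "nat set \<Rightarrow> nat \<Rightarrow> nat set \<Rightarrow> nat set set set" where
  "tset V x C = {E. is_tree V E \<and> children E x = C}"

definition splitset :: "nat set \<Rightarrow> nat \<Rightarrow> nat set \<Rightarrow> nat set \<Rightarrow> nat set \<Rightarrow> nat set set set" where
  "splitset V x Cs Cl S = {E. is_tree V E \<and> children E x = Cs \<union> Cl \<and> hanging_vertices E x Cs = S}"

lemma graph_edgeE:
  assumes "is_graph V E" "e \<in> E"
  obtains a b where "a \<noteq> b" "a \<in> V" "b \<in> V" "e = {a,b}"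
  using assms unfolding is_graph_def by metis

lemma is_graph_restrict: "is_graph V E \<Longrightarrow> is_graph W {e\<in>E. e \<subseteq> W}"
  unfolding is_graph_def
proof (intro ballI)
  fix e assume g: "\<forall>e\<in>E. \<exists>a b. a \<noteq> b \<and> a \<in> V \<and> b \<in> V \<and> e = {a, b}" and e: "e \<in> {e \<in> E. e \<subseteq> W}"
  have "e \<in> E" using e by simp
  with g obtain a b where ab: "a \<noteq> b" "e = {a,b}" by metis
  then have "a \<in> W" "b \<in> W" using e by auto
  with ab show "\<exists>a b. a \<noteq> b \<and> a \<in> W \<and> b \<in> W \<and> e = {a, b}" by metis
qed

lemma is_graph_union:
  assumes "is_graph V1 E1" "is_graph V2 E2" "V1 \<subseteq> V" "V2 \<subseteq> V"
  shows "is_graph V (E1 \<union> E2)"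
  unfolding is_graph_def
proof
  fix e assume "e \<in> E1 \<union> E2"
  then show "\<exists>a b. a \<noteq> b \<and> a \<in> V \<and> b \<in> V \<and> e = {a, b}"
  proof
    assume "e \<in> E1"
    then obtain a b where "a \<noteq> b" "a \<in> V1" "b \<in> V1" "e = {a,b}" by (rule graph_edgeE[OF assms(1)])
    then show ?thesis using assms(3) by (metis subsetD)
  next
    assume "e \<in> E2"
    then obtain a b where "a \<noteq> b" "a \<in> V2" "b \<in> V2" "e = {a,b}" by (rule graph_edgeE[OF assms(2)])
    then show ?thesis using assms(4) by (metis subsetD)
  qed
qed

lemma children_sub: "is_graph V E \<Longrightarrow> children E x \<subseteq> V - {x}"
  unfolding children_def adj_def by (auto dest: adj_in_V simp: adj_def)

context
  fixes V :: "nat set" and x :: nat and Cs Cl S :: "nat set"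
  assumes xV: "x \<in> V" and CsS: "Cs \<subseteq> S" and SV: "S \<subseteq> V - {x} - Cl"
begin

lemma split_cross:
  assumes E: "E \<in> splitset V x Cs Cl S" and u: "u \<in> S" and w: "w \<notin> S" "w \<noteq> x" and e: "{u,w} \<in> E"
  shows False
proof -
  have hS: "hanging_vertices E x Cs = S" using E unfolding splitset_def by auto
  from u obtain c where c: "c \<in> Cs" "(adj (avoid E x))\<^sup>*\<^sup>* c u"
    using hS unfolding hanging_vertices_def by blast
  have "u \<noteq> x" using u SV by auto
  moreover have "u \<noteq> w" using u w by auto
  ultimately have "adj (avoid E x) u w" using e w unfolding adj_def by simp
  with c have "(adj (avoid E x))\<^sup>*\<^sup>* c w" by (metis rtranclp.rtrancl_into_rtrancl)
  with c(1) have "w \<in> hanging_vertices E x Cs" unfolding hanging_vertices_def by blast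
  then show False using hS w by simp
qed

lemma split_edges:
  assumes E: "E \<in> splitset V x Cs Cl S"
  shows "E = {e\<in>E. e \<subseteq> insert x S} \<union> {e\<in>E. e \<subseteq> V - S}"
proof -
  have tr: "is_tree V E" using E unfolding splitset_def by auto
  have g: "is_graph V E" using tr unfolding is_tree_def by auto
  have "e \<subseteq> insert x S \<or> e \<subseteq> V - S" if e: "e \<in> E" for e
  proof -
    obtain a b where ab: "a \<noteq> b" "a \<in> V" "b \<in> V" "e = {a,b}" by (rule graph_edgeE[OF g e])
    show ?thesis
    proof (cases "a \<in> S")
      case aS: True
      show ?thesis
      proof (cases "b \<in> S \<or> b = x")
        case True then show ?thesis using aS ab(4) by auto
      next
        case False then show ?thesis using split_cross[OF E aS, of b] e ab(4) by auto
      qed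
    next
      case aS: False
      show ?thesis
      proof (cases "b \<in> S")
        case bS: True
        show ?thesis
        proof (cases "a = x")
          case True then show ?thesis using bS ab(4) by auto
        next
          case False then show ?thesis using split_cross[OF E bS aS] e ab(4) by (simp add: insert_commute)
        qed
      next
        case False then show ?thesis using aS ab by auto
      qed
    qed
  qed
  then show ?thesis by auto
qed

lemma split_left:
  assumes E: "E \<in> splitset V x Cs Cl S"
  shows "{e\<in>E. e \<subseteq> insert x S} \<in> tset (insert x S) x Cs"
proof -
  define E1 where "E1 = {e\<in>E. e \<subseteq> insert x S}"
  have tr: "is_tree V E" and hS: "hanging_vertices E x Cs = S" and ch: "children E x = Cs \<union> Cl"
    using E unfolding splitset_def by auto
  have g: "is_graph V E" and ac: "acyclic_graph E" using tr unfolding is_tree_def by auto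
  have g1: "is_graph (insert x S) E1" using is_graph_restrict[OF g] unfolding E1_def .
  have ac1: "acyclic_graph E1" using acyclic_mono[OF ac] unfolding E1_def by auto
  have reach: "(adj E1)\<^sup>*\<^sup>* c w" if "c \<in> Cs" "(adj (avoid E x))\<^sup>*\<^sup>* c w" for c w
    using that(2)
  proof (induction rule: rtranclp_induct)
    case base then show ?case by simp
  next
    case (step y z)
    have "y \<in> S" "z \<in> S" using hS step.hyps that(1) unfolding hanging_vertices_def
      by (auto intro: rtranclp.rtrancl_into_rtrancl)
    then have "adj E1 y z" using step.hyps(2) unfolding E1_def adj_def by auto
    then show ?case using step.IH by (blast intro: rtranclp.rtrancl_into_rtrancl)
  qed
  have con: "connected_graph (insert x S) E1"
  proof (rule connected_via[of x])
    fix v assume v: "v \<in> insert x S"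
    show "(adj E1)\<^sup>*\<^sup>* v x"
    proof (cases "v = x")
      case False
      then have "v \<in> S" using v by auto
      then obtain c where c: "c \<in> Cs" "(adj (avoid E x))\<^sup>*\<^sup>* c v"
        using hS unfolding hanging_vertices_def by blast
      have "adj E x c" using c(1) ch unfolding children_def by auto
      then have "adj E1 x c" using c(1) CsS unfolding E1_def adj_def by auto
      then have "(adj E1)\<^sup>*\<^sup>* x v" using reach[OF c] by (meson converse_rtranclp_into_rtranclp)
      then show ?thesis by (rule rtranclp_adj_sym)
    qed simp
  qed simp
  have "children E1 x = Cs"
  proof
    show "children E1 x \<subseteq> Cs"
    proof
      fix c assume "c \<in> children E1 x"
      then have "adj E x c" "c \<in> S" using adj_mono[of E1 E] unfolding children_def E1_def adj_def
        by auto
      then show "c \<in> Cs" using ch SV unfolding children_def by auto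
    qed
    show "Cs \<subseteq> children E1 x"
      using ch CsS unfolding children_def E1_def adj_def by auto
  qed
  then show ?thesis using g1 ac1 con unfolding E1_def[symmetric] tset_def is_tree_def by simp
qed

lemma split_right:
  assumes E: "E \<in> splitset V x Cs Cl S"
  shows "{e\<in>E. e \<subseteq> V - S} \<in> tset (V - S) x Cl"
proof -
  define E2 where "E2 = {e\<in>E. e \<subseteq> V - S}"
  have tr: "is_tree V E" and hS: "hanging_vertices E x Cs = S" and ch: "children E x = Cs \<union> Cl"
    using E unfolding splitset_def by auto
  have g: "is_graph V E" and ac: "acyclic_graph E" and cn: "connected_graph V E"
    using tr unfolding is_tree_def by auto
  have g2: "is_graph (V - S) E2" using is_graph_restrict[OF g] unfolding E2_def .
  have ac2: "acyclic_graph E2" using acyclic_mono[OF ac] unfolding E2_def by auto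
  have xS: "x \<notin> S" using SV by auto
  define \<pi> where "\<pi> v = (if v \<in> S then x else v)" for v
  have step: "(adj E2)\<^sup>*\<^sup>* (\<pi> u) (\<pi> w)" if "adj E u w" for u w
  proof -
    have uv: "u \<in> V" "w \<in> V" using adj_in_V[OF g that] by auto
    have cross: False if "a \<in> S" "b \<notin> S" "b \<noteq> x" "adj E a b" for a b
      using split_cross[OF E that(1-3)] that(4) unfolding adj_def by simp
    show ?thesis
    proof (cases "u \<in> S")
      case True
      show ?thesis
      proof (cases "w \<in> S")
        case False
        then have "w = x" using cross[OF True False] that by blast
        then show ?thesis using True xS unfolding \<pi>_def by simp
      qed (use True in \<open>simp add: \<pi>_def\<close>)
    next
      case False
      show ?thesis
      proof (cases "w \<in> S")
        case True
        then have "u = x" using cross[OF True False] that adj_sym by blast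
        then show ?thesis using True xS unfolding \<pi>_def by simp
      next
        case False
        then have "adj E2 u w" using \<open>u \<notin> S\<close> uv that unfolding E2_def adj_def by auto
        then show ?thesis using \<open>u \<notin> S\<close> False unfolding \<pi>_def by simp
      qed
    qed
  qed
  have con: "connected_graph (V - S) E2"
    unfolding connected_graph_def
  proof (intro ballI)
    fix u v assume "u \<in> V - S" "v \<in> V - S"
    then have "(adj E)\<^sup>*\<^sup>* u v" using cn unfolding connected_graph_def by auto
    from rtranclp_hom[of "adj E" "adj E2" \<pi>, OF step this]
    show "(adj E2)\<^sup>*\<^sup>* u v" using \<open>u \<in> V - S\<close> \<open>v \<in> V - S\<close> unfolding \<pi>_def by simp
  qed
  have "children E2 x = Cl"
  proof
    show "children E2 x \<subseteq> Cl"
    proof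
      fix c assume "c \<in> children E2 x"
      then have "adj E x c" "c \<notin> S" using adj_mono[of E2 E] unfolding children_def E2_def adj_def
        by auto
      then show "c \<in> Cl" using ch CsS unfolding children_def by auto
    qed
    show "Cl \<subseteq> children E2 x"
      using ch SV xV xS adj_in_V[OF g] unfolding children_def E2_def adj_def by auto
  qed
  then show ?thesis using g2 ac2 con unfolding E2_def[symmetric] tset_def is_tree_def by simp
qed

lemma glue:
  assumes E1: "E1 \<in> tset (insert x S) x Cs" and E2: "E2 \<in> tset (V - S) x Cl"
  shows "E1 \<union> E2 \<in> splitset V x Cs Cl S"
proof -
  have g1: "is_graph (insert x S) E1" and ac1: "acyclic_graph E1" and c1: "connected_graph (insert x S) E1"
    and ch1: "children E1 x = Cs"
    using E1 unfolding tset_def is_tree_def by auto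
  have g2: "is_graph (V - S) E2" and ac2: "acyclic_graph E2" and c2: "connected_graph (V - S) E2"
    and ch2: "children E2 x = Cl"
    using E2 unfolding tset_def is_tree_def by auto
  have xS: "x \<notin> S" using SV by auto
  have SV': "insert x S \<subseteq> V" using SV xV by auto
  have g: "is_graph V (E1 \<union> E2)" using is_graph_union[OF g1 g2 SV'] by auto
  have ac: "acyclic_graph (E1 \<union> E2)"
    by (rule acyclic_glue[OF g1 g2 ac1 ac2, of x]) (use xS xV in auto)
  have con: "connected_graph V (E1 \<union> E2)"
  proof (rule connected_via[OF xV])
    fix v assume v: "v \<in> V"
    show "(adj (E1 \<union> E2))\<^sup>*\<^sup>* v x"
    proof (cases "v \<in> S")
      case True
      then have "(adj E1)\<^sup>*\<^sup>* v x" using c1 unfolding connected_graph_def by auto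
      then show ?thesis by (rule rtranclp_adj_mono[rotated]) auto
    next
      case False
      then have "(adj E2)\<^sup>*\<^sup>* v x" using c2 v xV xS unfolding connected_graph_def by auto
      then show ?thesis by (rule rtranclp_adj_mono[rotated]) auto
    qed
  qed
  have ch: "children (E1 \<union> E2) x = Cs \<union> Cl" using ch1 ch2 children_union by simp
  have h: "hanging_vertices (E1 \<union> E2) x Cs = S"
  proof
    show "hanging_vertices (E1 \<union> E2) x Cs \<subseteq> S"
    proof
      fix v assume "v \<in> hanging_vertices (E1 \<union> E2) x Cs"
      then obtain c where c: "c \<in> Cs" "(adj (avoid (E1 \<union> E2) x))\<^sup>*\<^sup>* c v"
        unfolding hanging_vertices_def by blast
      have cl: "w \<in> S" if "adj (avoid (E1 \<union> E2) x) u w" "u \<in> S" for u w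
      proof -
        have e: "{u,w} \<in> E1 \<union> E2" "x \<notin> {u,w}" "u \<noteq> w" using that(1) unfolding adj_def by auto
        show ?thesis
        proof (cases "{u,w} \<in> E1")
          case True
          then show ?thesis using is_graph_edge[OF g1 True] e by (auto simp: doubleton_eq_iff)
        next
          case False
          then have "{u,w} \<in> E2" using e by auto
          then obtain a b where "a \<notin> S" "b \<notin> S" "{u,w} = {a,b}" using is_graph_edge[OF g2] by blast
          then show ?thesis using that(2) by (auto simp: doubleton_eq_iff)
        qed
      qed
      have cS: "c \<in> S" using c(1) CsS by blast
      show "v \<in> S" using rtranclp_closed[of "adj (avoid (E1 \<union> E2) x)" S c v] cl c(2) cS by blast
    qed
    show "S \<subseteq> hanging_vertices (E1 \<union> E2) x Cs"
    proof
      fix v assume v: "v \<in> S"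
      then have "v \<in> hanging_vertices E1 x (children E1 x)"
        using hanging_all[OF c1, of x v] xS v by (auto simp del: insert_iff)
      then obtain c where c: "c \<in> Cs" "(adj (avoid E1 x))\<^sup>*\<^sup>* c v"
        using ch1 unfolding hanging_vertices_def by blast
      have "(adj (avoid (E1 \<union> E2) x))\<^sup>*\<^sup>* c v"
        by (rule rtranclp_adj_mono[OF _ c(2)]) auto
      then show "v \<in> hanging_vertices (E1 \<union> E2) x Cs"
        using c(1) unfolding hanging_vertices_def by blast
    qed
  qed
  show ?thesis using g ac con ch h unfolding splitset_def is_tree_def by simp
qed

lemma split_inv2:
  assumes E1: "E1 \<in> tset (insert x S) x Cs" and E2: "E2 \<in> tset (V - S) x Cl"
  shows "({e \<in> E1 \<union> E2. e \<subseteq> insert x S}, {e \<in> E1 \<union> E2. e \<subseteq> V - S}) = (E1, E2)"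
proof -
  have g1: "is_graph (insert x S) E1" using E1 unfolding tset_def is_tree_def by auto
  have g2: "is_graph (V - S) E2" using E2 unfolding tset_def is_tree_def by auto
  have xS: "x \<notin> S" using SV by auto
  have a: "{e \<in> E1 \<union> E2. e \<subseteq> insert x S} = E1"
  proof -
    have False if t1: "e \<in> E2" and t2: "e \<subseteq> insert x S" for e
    proof -
      obtain a b where "a \<noteq> b" "a \<in> V - S" "b \<in> V - S" "e = {a,b}" by (rule graph_edgeE[OF g2 t1])
      then show False using t2 by auto
    qed
    moreover have "e \<subseteq> insert x S" if t1: "e \<in> E1" for e
    proof -
      obtain a b where "a \<noteq> b" "a \<in> insert x S" "b \<in> insert x S" "e = {a,b}" by (rule graph_edgeE[OF g1 t1])
      then show ?thesis by simp
    qed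
    ultimately show ?thesis by blast
  qed
  have b: "{e \<in> E1 \<union> E2. e \<subseteq> V - S} = E2"
  proof -
    have False if t1: "e \<in> E1" and t2: "e \<subseteq> V - S" for e
    proof -
      obtain a b where "a \<noteq> b" "a \<in> insert x S" "b \<in> insert x S" "e = {a,b}" by (rule graph_edgeE[OF g1 t1])
      then show False using t2 by auto
    qed
    moreover have "e \<subseteq> V - S" if t1: "e \<in> E2" for e
    proof -
      obtain a b where "a \<noteq> b" "a \<in> V - S" "b \<in> V - S" "e = {a,b}" by (rule graph_edgeE[OF g2 t1])
      then show ?thesis by simp
    qed
    ultimately show ?thesis by blast
  qed
  show ?thesis using a b by simp
qed

lemma split_bij:
  "bij_betw (\<lambda>E. ({e\<in>E. e \<subseteq> insert x S}, {e\<in>E. e \<subseteq> V - S}))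
     (splitset V x Cs Cl S) (tset (insert x S) x Cs \<times> tset (V - S) x Cl)"
proof (rule bij_betw_byWitness[where f' = "\<lambda>(E1,E2). E1 \<union> E2"])
  show "\<forall>a\<in>splitset V x Cs Cl S. (\<lambda>(E1, E2). E1 \<union> E2) ({e \<in> a. e \<subseteq> insert x S}, {e \<in> a. e \<subseteq> V - S}) = a"
  proof
    fix a assume a: "a \<in> splitset V x Cs Cl S"
    have "{e \<in> a. e \<subseteq> insert x S} \<union> {e \<in> a. e \<subseteq> V - S} = a" using split_edges[OF a] by metis
    then show "(\<lambda>(E1, E2). E1 \<union> E2) ({e \<in> a. e \<subseteq> insert x S}, {e \<in> a. e \<subseteq> V - S}) = a"
      by (simp only: case_prod_conv)
  qed
  show "(\<lambda>E. ({e \<in> E. e \<subseteq> insert x S}, {e \<in> E. e \<subseteq> V - S})) ` splitset V x Cs Cl S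
        \<subseteq> tset (insert x S) x Cs \<times> tset (V - S) x Cl"
    using split_left split_right by auto
  show "(\<lambda>(E1, E2). E1 \<union> E2) ` (tset (insert x S) x Cs \<times> tset (V - S) x Cl) \<subseteq> splitset V x Cs Cl S"
    using glue by auto
  show "\<forall>a'\<in>tset (insert x S) x Cs \<times> tset (V - S) x Cl.
       ({e \<in> (\<lambda>(E1, E2). E1 \<union> E2) a'. e \<subseteq> insert x S}, {e \<in> (\<lambda>(E1, E2). E1 \<union> E2) a'. e \<subseteq> V - S}) = a'"
    using split_inv2 by auto
qed

end

lemma rtranclp_lift:
  assumes step: "\<And>u w u0 w0. S u w \<Longrightarrow> P u u0 \<Longrightarrow> P w w0 \<Longrightarrow> R\<^sup>*\<^sup>* u0 w0"
    and ex: "\<And>u w. S u w \<Longrightarrow> \<exists>u0. P u u0"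
    and same: "\<And>u u0 u1. P u u0 \<Longrightarrow> P u u1 \<Longrightarrow> R\<^sup>*\<^sup>* u0 u1"
  shows "S\<^sup>*\<^sup>* a b \<Longrightarrow> P a a0 \<Longrightarrow> P b b0 \<Longrightarrow> R\<^sup>*\<^sup>* a0 b0"
proof (induction arbitrary: b0 rule: rtranclp_induct)
  case base then show ?case using same by blast
next
  case (step y z)
  obtain y0 where y0: "P y y0" using ex[OF step.hyps(2)] by blast
  have "R\<^sup>*\<^sup>* a0 y0" using step.IH[OF step.prems(1) y0] .
  moreover have "R\<^sup>*\<^sup>* y0 b0" using assms(1)[OF step.hyps(2) y0 step.prems(2)] .
  ultimately show ?case by (rule rtranclp_trans)
qed

definition kap :: "nat \<Rightarrow> nat \<Rightarrow> nat \<Rightarrow> nat" where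
  "kap x r v = (if v = r then x else v)"

definition contract :: "nat \<Rightarrow> nat \<Rightarrow> nat set set \<Rightarrow> nat set set" where
  "contract x r E = (\<lambda>e. kap x r ` e) ` (E - {{x,r}})"

definition expand :: "nat \<Rightarrow> nat \<Rightarrow> nat set \<Rightarrow> nat set set \<Rightarrow> nat set set" where
  "expand x r D E' = (E' - (\<lambda>d. {x,d}) ` D) \<union> (\<lambda>d. {r,d}) ` D \<union> {{x,r}}"

lemma kap_img: "kap x r ` {a,b} = {kap x r a, kap x r b}"
  by simp

lemma kap_neq: "a \<noteq> b \<Longrightarrow> {a,b} \<noteq> {x,r} \<Longrightarrow> x \<noteq> r \<Longrightarrow> kap x r a \<noteq> kap x r b"
  unfolding kap_def by (auto simp: doubleton_eq_iff)

lemma kap_same: "kap x r a = kap x r b \<Longrightarrow> a \<noteq> b \<Longrightarrow> {a,b} = {x,r}"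
  unfolding kap_def by (auto split: if_splits)

context
  fixes V :: "nat set" and x r :: nat and C :: "nat set"
  assumes xV: "x \<in> V" and CV: "C \<subseteq> V - {x}" and rC: "r \<in> C"
begin

lemma xr: "x \<noteq> r" "r \<in> V" using CV rC by auto

lemma kap_V: "a \<in> V \<Longrightarrow> kap x r a \<in> V - {r}"
  unfolding kap_def using xV xr by auto

context
  fixes E assumes E: "E \<in> tset V x C"
begin

lemma E_props: "is_graph V E" "connected_graph V E" "acyclic_graph E" "children E x = C"
  using E unfolding tset_def is_tree_def by auto

lemma xr_edge: "{x,r} \<in> E"
  using E_props(4) rC unfolding children_def adj_def by auto

lemma D_sub: "children E r - {x} \<subseteq> V - {x} - C"
proof
  fix d assume d: "d \<in> children E r - {x}"
  then have adj: "adj E r d" "d \<noteq> x" unfolding children_def by auto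
  have dV: "d \<in> V" using adj_in_V[OF E_props(1) adj(1)] by simp
  have "d \<notin> C"
  proof
    assume dC: "d \<in> C"
    have rd: "r \<noteq> d" "{r,d} \<in> E" using adj(1) unfolding adj_def by auto
    have "adj (avoid E x) r d" using rd adj(2) xr unfolding adj_def by auto
    then have "(adj (avoid E x))\<^sup>*\<^sup>* r d" by simp
    moreover have "adj E x d" "adj E x r" using dC rC E_props(4) unfolding children_def by auto
    ultimately have "d = r" using no_cycle_children[OF E_props(3)] by blast
    then show False using rd by simp
  qed
  then show "d \<in> V - {x} - C" using dV adj by simp
qed

lemma contract_graph: "is_graph (V - {r}) (contract x r E)"
  unfolding is_graph_def contract_def
proof
  fix e' assume "e' \<in> (\<lambda>e. kap x r ` e) ` (E - {{x,r}})"
  then obtain e where e: "e \<in> E" "e \<noteq> {x,r}" "e' = kap x r ` e" by blast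
  obtain a b where ab: "a \<noteq> b" "a \<in> V" "b \<in> V" "e = {a,b}" by (rule graph_edgeE[OF E_props(1) e(1)])
  have "kap x r a \<noteq> kap x r b" using kap_neq ab e(2) xr by metis
  moreover have "kap x r a \<in> V - {r}" "kap x r b \<in> V - {r}" using kap_V ab by auto
  moreover have "e' = {kap x r a, kap x r b}" using e(3) ab(4) by simp
  ultimately show "\<exists>a b. a \<noteq> b \<and> a \<in> V - {r} \<and> b \<in> V - {r} \<and> e' = {a, b}" by metis
qed

lemma contract_step: "adj E u w \<Longrightarrow> (adj (contract x r E))\<^sup>*\<^sup>* (kap x r u) (kap x r w)"
proof -
  assume a: "adj E u w"
  show ?thesis
  proof (cases "{u,w} = {x,r}")
    case True
    then have "kap x r u = kap x r w" unfolding kap_def by (auto simp: doubleton_eq_iff)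
    then show ?thesis by simp
  next
    case False
    have uw: "u \<noteq> w" "{u,w} \<in> E" using a unfolding adj_def by auto
    have ne: "kap x r u \<noteq> kap x r w" using kap_neq uw(1) False xr by metis
    have "kap x r ` {u,w} \<in> contract x r E" unfolding contract_def using uw False by blast
    then have "adj (contract x r E) (kap x r u) (kap x r w)" using ne unfolding adj_def by simp
    then show ?thesis by simp
  qed
qed

lemma contract_conn: "connected_graph (V - {r}) (contract x r E)"
  unfolding connected_graph_def
proof (intro ballI)
  fix u v assume uv: "u \<in> V - {r}" "v \<in> V - {r}"
  then have "(adj E)\<^sup>*\<^sup>* u v" using E_props(2) unfolding connected_graph_def by auto
  from rtranclp_hom[of "adj E" _ "kap x r", OF contract_step this]
  show "(adj (contract x r E))\<^sup>*\<^sup>* u v" using uv unfolding kap_def by simp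
qed

lemma contract_acyclic: "acyclic_graph (contract x r E)"
  unfolding acyclic_graph_def
proof (intro allI impI notI)
  fix a b assume ab: "a \<noteq> b \<and> {a, b} \<in> contract x r E"
    and p: "(adj (contract x r E - {{a, b}}))\<^sup>*\<^sup>* a b"
  obtain e0 where e0: "e0 \<in> E" "e0 \<noteq> {x,r}" "{a,b} = kap x r ` e0"
    using ab unfolding contract_def by blast
  obtain a0 b0 where ab0: "a0 \<noteq> b0" "a0 \<in> V" "b0 \<in> V" "e0 = {a0,b0}"
    by (rule graph_edgeE[OF E_props(1) e0(1)])
  define R where "R = adj (E - {e0})"
  define S where "S = adj (contract x r E - {{a, b}})"
  define P where "P u u0 \<longleftrightarrow> u0 \<in> V \<and> kap x r u0 = u" for u u0
  have same: "R\<^sup>*\<^sup>* u0 u1" if "P u u0" "P u u1" for u u0 u1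
  proof (cases "u0 = u1")
    case False
    then have "{u0,u1} = {x,r}" using kap_same that unfolding P_def by metis
    then have "R u0 u1" unfolding R_def adj_def using xr_edge e0(2) False by auto
    then show ?thesis by simp
  qed simp
  have ex: "\<exists>u0. P u u0" if "S u w" for u w
  proof -
    have "adj (contract x r E) u w" using that unfolding S_def adj_def by auto
    then have "u \<in> V - {r}" using adj_in_V[OF contract_graph] by blast
    then have "P u u" unfolding P_def kap_def by auto
    then show ?thesis by blast
  qed
  have step: "R\<^sup>*\<^sup>* u0 w0" if s: "S u w" and pu: "P u u0" and pw: "P w w0" for u w u0 w0
  proof -
    have uw: "u \<noteq> w" "{u,w} \<in> contract x r E" "{u,w} \<noteq> {a,b}" using s unfolding S_def adj_def by auto
    obtain f where f: "f \<in> E" "f \<noteq> {x,r}" "{u,w} = kap x r ` f"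
      using uw(2) unfolding contract_def by blast
    obtain f1 f2 where ff: "f1 \<noteq> f2" "f1 \<in> V" "f2 \<in> V" "f = {f1,f2}"
      by (rule graph_edgeE[OF E_props(1) f(1)])
    have fe0: "f \<noteq> e0" using f(3) e0(3) uw(3) by auto
    have Rf: "R f1 f2" "R f2 f1" unfolding R_def adj_def using ff f(1) fe0 by (auto simp: insert_commute)
    have "{u,w} = {kap x r f1, kap x r f2}" using f(3) ff(4) by simp
    then have "(kap x r f1 = u \<and> kap x r f2 = w) \<or> (kap x r f1 = w \<and> kap x r f2 = u)"
      by (auto simp: doubleton_eq_iff)
    then show ?thesis
    proof
      assume h: "kap x r f1 = u \<and> kap x r f2 = w"
      have "R\<^sup>*\<^sup>* u0 f1" using same[OF pu] h ff unfolding P_def by blast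
      moreover have "R\<^sup>*\<^sup>* f2 w0" using same[OF _ pw, of f2] h ff unfolding P_def by blast
      ultimately show ?thesis using Rf(1) by (meson converse_rtranclp_into_rtranclp rtranclp_trans)
    next
      assume h: "kap x r f1 = w \<and> kap x r f2 = u"
      have "R\<^sup>*\<^sup>* u0 f2" using same[OF pu] h ff unfolding P_def by blast
      moreover have "R\<^sup>*\<^sup>* f1 w0" using same[OF _ pw, of f1] h ff unfolding P_def by blast
      ultimately show ?thesis using Rf(2) by (meson converse_rtranclp_into_rtranclp rtranclp_trans)
    qed
  qed
  have pS: "S\<^sup>*\<^sup>* a b" using p unfolding S_def .
  have L: "R\<^sup>*\<^sup>* a0' b0'" if h: "S\<^sup>*\<^sup>* a' b'" "P a' a0'" "P b' b0'" for a' b' a0' b0'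
  proof (rule rtranclp_lift[of S P R])
    show "\<And>u w u0 w0. S u w \<Longrightarrow> P u u0 \<Longrightarrow> P w w0 \<Longrightarrow> R\<^sup>*\<^sup>* u0 w0" by (rule step)
    show "\<And>u w. S u w \<Longrightarrow> \<exists>u0. P u u0" by (rule ex)
    show "\<And>u u0 u1. P u u0 \<Longrightarrow> P u u1 \<Longrightarrow> R\<^sup>*\<^sup>* u0 u1" by (rule same)
  qed (rule h)+
  have "{a,b} = {kap x r a0, kap x r b0}" using e0(3) ab0(4) by simp
  then have "(kap x r a0 = a \<and> kap x r b0 = b) \<or> (kap x r a0 = b \<and> kap x r b0 = a)"
    by (auto simp: doubleton_eq_iff)
  then have "R\<^sup>*\<^sup>* a0 b0"
  proof
    assume h: "kap x r a0 = a \<and> kap x r b0 = b"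
    then have "P a a0" "P b b0" using ab0 unfolding P_def by auto
    then show ?thesis using L[OF pS] by blast
  next
    assume h: "kap x r a0 = b \<and> kap x r b0 = a"
    then have "P a b0" "P b a0" using ab0 unfolding P_def by auto
    then have "R\<^sup>*\<^sup>* b0 a0" using L[OF pS] by blast
    then show ?thesis unfolding R_def by (rule rtranclp_adj_sym)
  qed
  then show False using E_props(3) ab0 e0(1) unfolding acyclic_graph_def R_def by blast
qed

lemma contract_children: "children (contract x r E) x = (C - {r}) \<union> (children E r - {x})"
proof (rule set_eqI)
  fix c
  show "c \<in> children (contract x r E) x \<longleftrightarrow> c \<in> (C - {r}) \<union> (children E r - {x})"
  proof
    assume "c \<in> children (contract x r E) x"
    then have c: "x \<noteq> c" "{x,c} \<in> contract x r E" unfolding children_def adj_def by auto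
    obtain f where f: "f \<in> E" "f \<noteq> {x,r}" "{x,c} = kap x r ` f"
      using c(2) unfolding contract_def by blast
    obtain p q where pq: "p \<noteq> q" "p \<in> V" "q \<in> V" "f = {p,q}"
      by (rule graph_edgeE[OF E_props(1) f(1)])
    have g: "c \<in> (C - {r}) \<union> (children E r - {x})"
      if h: "kap x r p = x" "kap x r q = c" "{p,q} \<in> E" "p \<noteq> q" for p q
    proof -
      have q: "q \<noteq> r" "q = c" using h(2) c(1) unfolding kap_def by (auto split: if_splits)
      have "p = x \<or> p = r" using h(1) unfolding kap_def by (auto split: if_splits)
      then show ?thesis
      proof
        assume "p = x"
        then have "adj E x c" using h q unfolding adj_def by simp
        then show ?thesis using E_props(4) q unfolding children_def by auto
      next
        assume "p = r"
        then have "adj E r c" using h q unfolding adj_def by simp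
        then show ?thesis using c(1) unfolding children_def by auto
      qed
    qed
    have "{x,c} = {kap x r p, kap x r q}" using f(3) pq(4) by simp
    then have "(kap x r p = x \<and> kap x r q = c) \<or> (kap x r q = x \<and> kap x r p = c)"
      by (auto simp: doubleton_eq_iff)
    then show "c \<in> (C - {r}) \<union> (children E r - {x})"
    proof
      assume "kap x r p = x \<and> kap x r q = c"
      then show ?thesis using g[of p q] f(1) pq by auto
    next
      assume "kap x r q = x \<and> kap x r p = c"
      moreover have "{q,p} \<in> E" using f(1) pq(4) by (simp add: insert_commute)
      ultimately show ?thesis using g[of q p] pq by auto
    qed
  next
    assume c: "c \<in> (C - {r}) \<union> (children E r - {x})"
    show "c \<in> children (contract x r E) x"
    proof (cases "c \<in> C - {r}")
      case True
      then have a: "adj E x c" "c \<noteq> r" using E_props(4) unfolding children_def by auto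
      then have f: "{x,c} \<in> E" "x \<noteq> c" unfolding adj_def by auto
      have "{x,c} \<noteq> {x,r}" using a(2) by (auto simp: doubleton_eq_iff)
      moreover have "kap x r ` {x,c} = {x,c}" using a(2) xr unfolding kap_def by auto
      ultimately have "{x,c} \<in> contract x r E" unfolding contract_def using f(1) by (metis DiffI image_eqI singletonD)
      then show ?thesis using f(2) unfolding children_def adj_def by simp
    next
      case False
      then have a: "adj E r c" "c \<noteq> x" using c unfolding children_def by auto
      then have f: "{r,c} \<in> E" "r \<noteq> c" unfolding adj_def by auto
      have "{r,c} \<noteq> {x,r}" using a(2) by (auto simp: doubleton_eq_iff)
      moreover have "kap x r ` {r,c} = {x,c}" using f(2) unfolding kap_def by auto
      ultimately have "{x,c} \<in> contract x r E" unfolding contract_def using f(1) by (metis DiffI image_eqI singletonD)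
      then show ?thesis using a(2) unfolding children_def adj_def by simp
    qed
  qed
qed

lemma contract_in: "contract x r E \<in> tset (V - {r}) x ((C - {r}) \<union> (children E r - {x}))"
  unfolding tset_def is_tree_def
  using contract_graph contract_conn contract_acyclic contract_children by simp

lemma expand_contract: "expand x r (children E r - {x}) (contract x r E) = E"
proof (rule set_eqI)
  fix e
  show "e \<in> expand x r (children E r - {x}) (contract x r E) \<longleftrightarrow> e \<in> E"
  proof
    assume "e \<in> expand x r (children E r - {x}) (contract x r E)"
    then consider (a) "e \<in> contract x r E" "e \<notin> (\<lambda>d. {x,d}) ` (children E r - {x})"
      | (b) "e \<in> (\<lambda>d. {r,d}) ` (children E r - {x})" | (c) "e = {x,r}"
      unfolding expand_def by blast
    then show "e \<in> E"
    proof cases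
      case a
      obtain f where f: "f \<in> E" "f \<noteq> {x,r}" "e = kap x r ` f"
        using a(1) unfolding contract_def by blast
      obtain p q where pq: "p \<noteq> q" "p \<in> V" "q \<in> V" "f = {p,q}"
        by (rule graph_edgeE[OF E_props(1) f(1)])
      show ?thesis
      proof (cases "r \<in> f")
        case False
        then have "e = f" using f(3) unfolding kap_def by auto
        then show ?thesis using f(1) by simp
      next
        case True
        then obtain d where d: "f = {r,d}" "d \<noteq> r" using pq(1) pq(4) by auto
        then have "d \<noteq> x" using f(2) by (auto simp: insert_commute)
        then have "e = {x,d}" using f(3) d unfolding kap_def by auto
        moreover have "d \<in> children E r - {x}" using d f(1) \<open>d \<noteq> x\<close> unfolding children_def adj_def by auto
        ultimately show ?thesis using a(2) by auto
      qed
    next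
      case b
      then obtain d where "d \<in> children E r - {x}" "e = {r,d}" by blast
      then show ?thesis unfolding children_def adj_def by auto
    next
      case c
      then show ?thesis using xr_edge by simp
    qed
  next
    assume e: "e \<in> E"
    obtain p q where pq: "p \<noteq> q" "p \<in> V" "q \<in> V" "e = {p,q}"
      by (rule graph_edgeE[OF E_props(1) e])
    show "e \<in> expand x r (children E r - {x}) (contract x r E)"
    proof (cases "e = {x,r}")
      case True then show ?thesis unfolding expand_def by simp
    next
      case ne: False
      show ?thesis
      proof (cases "r \<in> e")
        case True
        then obtain d where d: "e = {r,d}" "d \<noteq> r" using pq(1) pq(4) by auto
        then have "d \<noteq> x" using ne by (auto simp: insert_commute)
        then have "d \<in> children E r - {x}" using d e unfolding children_def adj_def by auto
        then show ?thesis unfolding expand_def using d(1) by blast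
      next
        case False
        then have ke: "kap x r ` e = e" unfolding kap_def by auto
        then have "e \<in> contract x r E" unfolding contract_def using e ne by (metis DiffI image_eqI singletonD)
        moreover have "e \<notin> (\<lambda>d. {x,d}) ` (children E r - {x})"
        proof
          assume "e \<in> (\<lambda>d. {x,d}) ` (children E r - {x})"
          then obtain d where d: "d \<in> children E r - {x}" "e = {x,d}" by blast
          have "d \<in> V - {x} - C" using D_sub d(1) by blast
          moreover have "adj E x d" using d pq e unfolding adj_def by auto
          ultimately show False using E_props(4) unfolding children_def by auto
        qed
        ultimately show ?thesis unfolding expand_def by blast
      qed
    qed
  qed
qed

end

end

context
  fixes V :: "nat set" and x r :: nat and C :: "nat set"
  assumes xV: "x \<in> V" and CV: "C \<subseteq> V - {x}" and rC: "r \<in> C"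
begin

context
  fixes D E' assumes DV: "D \<subseteq> V - {x} - C" and E': "E' \<in> tset (V - {r}) x ((C - {r}) \<union> D)"
begin

abbreviation "Xp \<equiv> expand x r D E'"

lemma E'_props: "is_graph (V - {r}) E'" "connected_graph (V - {r}) E'" "acyclic_graph E'"
  "children E' x = (C - {r}) \<union> D"
  using E' unfolding tset_def is_tree_def by auto

lemma xr': "x \<noteq> r" "r \<in> V" using CV rC by auto

lemma d_facts: "d \<in> D \<Longrightarrow> d \<noteq> x \<and> d \<noteq> r \<and> d \<in> V \<and> d \<notin> C \<and> adj E' x d"
  using DV rC E'_props(4) unfolding children_def by auto

lemma r_notin_E': "f \<in> E' \<Longrightarrow> r \<notin> f"
proof
  assume "f \<in> E'" "r \<in> f"
  then obtain a b where "a \<in> V - {r}" "b \<in> V - {r}" "f = {a,b}" using graph_edgeE[OF E'_props(1)] by metis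
  then show False using \<open>r \<in> f\<close> by auto
qed

lemma classify:
  assumes f: "f \<in> Xp" "f \<noteq> {x,r}"
  shows "(f \<in> E' \<and> f \<notin> (\<lambda>d. {x,d}) ` D \<and> r \<notin> f \<and> kap x r ` f = f)
       \<or> (\<exists>d\<in>D. f = {r,d} \<and> kap x r ` f = {x,d})"
proof -
  consider (a) "f \<in> E'" "f \<notin> (\<lambda>d. {x,d}) ` D" | (b) "f \<in> (\<lambda>d. {r,d}) ` D"
    using f unfolding expand_def by blast
  then show ?thesis
  proof cases
    case a
    then have "r \<notin> f" using r_notin_E' by blast
    then have "kap x r ` f = f" unfolding kap_def by auto
    then show ?thesis using a \<open>r \<notin> f\<close> by blast
  next
    case b
    then obtain d where d: "d \<in> D" "f = {r,d}" by blast
    then have "kap x r ` f = {x,d}" using d_facts[OF d(1)] unfolding kap_def by auto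
    then show ?thesis using d by blast
  qed
qed

lemma kE: "f \<in> Xp \<Longrightarrow> f \<noteq> {x,r} \<Longrightarrow> kap x r ` f \<in> E'"
proof -
  assume f: "f \<in> Xp" "f \<noteq> {x,r}"
  from classify[OF f] show ?thesis
  proof
    assume "f \<in> E' \<and> f \<notin> (\<lambda>d. {x,d}) ` D \<and> r \<notin> f \<and> kap x r ` f = f"
    then show ?thesis by simp
  next
    assume "\<exists>d\<in>D. f = {r,d} \<and> kap x r ` f = {x,d}"
    then obtain d where d: "d \<in> D" "kap x r ` f = {x,d}" by blast
    then show ?thesis using d_facts[OF d(1)] unfolding adj_def by simp
  qed
qed

lemma k_inj: "f \<in> Xp \<Longrightarrow> f \<noteq> {x,r} \<Longrightarrow> g \<in> Xp \<Longrightarrow> g \<noteq> {x,r} \<Longrightarrow> kap x r ` f = kap x r ` g \<Longrightarrow> f = g"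
proof -
  assume f: "f \<in> Xp" "f \<noteq> {x,r}" and g: "g \<in> Xp" "g \<noteq> {x,r}" and eq: "kap x r ` f = kap x r ` g"
  have AB: False if A: "f' \<in> E'" "f' \<notin> (\<lambda>d. {x,d}) ` D" "kap x r ` f' = f'"
    and B: "d \<in> D" "kap x r ` g' = {x,d}" and e: "kap x r ` f' = kap x r ` g'" for f' g' d
  proof -
    have "f' = {x,d}" using A(3) B(2) e by simp
    then have "f' \<in> (\<lambda>d. {x,d}) ` D" using B(1) by blast
    then show False using A(2) by blast
  qed
  from classify[OF f] classify[OF g] show "f = g"
  proof (elim disjE)
    assume "f \<in> E' \<and> f \<notin> (\<lambda>d. {x,d}) ` D \<and> r \<notin> f \<and> kap x r ` f = f"
      "g \<in> E' \<and> g \<notin> (\<lambda>d. {x,d}) ` D \<and> r \<notin> g \<and> kap x r ` g = g"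
    then show ?thesis using eq by metis
  next
    assume a: "f \<in> E' \<and> f \<notin> (\<lambda>d. {x,d}) ` D \<and> r \<notin> f \<and> kap x r ` f = f"
      and b: "\<exists>d\<in>D. g = {r,d} \<and> kap x r ` g = {x,d}"
    then obtain d where "d \<in> D" "kap x r ` g = {x,d}" by blast
    then show ?thesis using AB[of f d g] a eq by blast
  next
    assume b: "\<exists>d\<in>D. f = {r,d} \<and> kap x r ` f = {x,d}"
      and a: "g \<in> E' \<and> g \<notin> (\<lambda>d. {x,d}) ` D \<and> r \<notin> g \<and> kap x r ` g = g"
    then obtain d where "d \<in> D" "kap x r ` f = {x,d}" by blast
    then show ?thesis using AB[of g d f] a eq by metis
  next
    assume "\<exists>d\<in>D. f = {r,d} \<and> kap x r ` f = {x,d}" "\<exists>d\<in>D. g = {r,d} \<and> kap x r ` g = {x,d}"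
    then obtain d d' where d: "d \<in> D" "f = {r,d}" "kap x r ` f = {x,d}"
      and d': "d' \<in> D" "g = {r,d'}" "kap x r ` g = {x,d'}" by blast
    have "{x,d} = {x,d'}" using d(3) d'(3) eq by simp
    then have "d = d'" using d_facts[OF d(1)] d_facts[OF d'(1)] by (auto simp: doubleton_eq_iff)
    then show ?thesis using d d' by simp
  qed
qed

lemma expand_graph: "is_graph V Xp"
  unfolding is_graph_def
proof
  fix f assume f: "f \<in> Xp"
  show "\<exists>a b. a \<noteq> b \<and> a \<in> V \<and> b \<in> V \<and> f = {a, b}"
  proof (cases "f = {x,r}")
    case True then show ?thesis using xV xr' by metis
  next
    case False
    from classify[OF f False] show ?thesis
    proof
      assume "f \<in> E' \<and> f \<notin> (\<lambda>d. {x,d}) ` D \<and> r \<notin> f \<and> kap x r ` f = f"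
      then obtain a b where "a \<noteq> b" "a \<in> V - {r}" "b \<in> V - {r}" "f = {a,b}"
        using graph_edgeE[OF E'_props(1)] by metis
      then show ?thesis by blast
    next
      assume "\<exists>d\<in>D. f = {r,d} \<and> kap x r ` f = {x,d}"
      then obtain d where "d \<in> D" "f = {r,d}" by blast
      then show ?thesis using d_facts xr' by metis
    qed
  qed
qed

lemma expand_xr: "{x,r} \<in> Xp" unfolding expand_def by simp

lemma expand_rd: "d \<in> D \<Longrightarrow> {r,d} \<in> Xp" unfolding expand_def by blast

lemma expand_conn: "connected_graph V Xp"
proof (rule connected_via[OF xV])
  have step: "(adj Xp)\<^sup>*\<^sup>* u w" if a: "adj E' u w" for u w
  proof (cases "{u,w} \<in> (\<lambda>d. {x,d}) ` D")
    case True
    then obtain d where d: "d \<in> D" "{u,w} = {x,d}" by blast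
    have xr: "adj Xp x r" using expand_xr xr' unfolding adj_def by simp
    have rd: "adj Xp r d" using expand_rd[OF d(1)] d_facts[OF d(1)] unfolding adj_def by auto
    have p1: "(adj Xp)\<^sup>*\<^sup>* x d" using xr rd by (meson converse_rtranclp_into_rtranclp r_into_rtranclp)
    have "(u = x \<and> w = d) \<or> (u = d \<and> w = x)" using d(2) by (auto simp: doubleton_eq_iff)
    then show ?thesis using p1 rtranclp_adj_sym by metis
  next
    case False
    then have "adj Xp u w" using a unfolding adj_def expand_def by auto
    then show ?thesis by simp
  qed
  fix v assume v: "v \<in> V"
  show "(adj Xp)\<^sup>*\<^sup>* v x"
  proof (cases "v = r")
    case True
    have "adj Xp r x" using expand_xr xr' unfolding adj_def by (simp add: insert_commute)
    then show ?thesis using True by simp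
  next
    case False
    then have "(adj E')\<^sup>*\<^sup>* v x" using E'_props(2) v xV xr' unfolding connected_graph_def by auto
    from rtranclp_hom[of "adj E'" "adj Xp" "\<lambda>v. v", OF step this] show ?thesis .
  qed
qed

lemma expand_acyclic: "acyclic_graph Xp"
  unfolding acyclic_graph_def
proof (intro allI impI notI)
  fix a b assume ab: "a \<noteq> b \<and> {a, b} \<in> Xp" and p: "(adj (Xp - {{a, b}}))\<^sup>*\<^sup>* a b"
  show False
  proof (cases "{a,b} = {x,r}")
    case True
    define Z where "Z = insert r (hanging_vertices E' x D)"
    have xD: "x \<notin> D" using DV by auto
    have xZ: "x \<notin> Z" unfolding Z_def using x_notin_hanging[OF xD] xr' by auto
    have cl: "w \<in> Z" if s: "adj (Xp - {{x,r}}) u w" and uZ: "u \<in> Z" for u w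
    proof -
      have uw: "u \<noteq> w" "{u,w} \<in> Xp" "{u,w} \<noteq> {x,r}" using s unfolding adj_def by auto
      from classify[OF uw(2,3)] show ?thesis
      proof
        assume A: "{u,w} \<in> E' \<and> {u,w} \<notin> (\<lambda>d. {x,d}) ` D \<and> r \<notin> {u,w} \<and> kap x r ` {u,w} = {u,w}"
        then have uh: "u \<in> hanging_vertices E' x D" using uZ unfolding Z_def by auto
        show ?thesis
        proof (cases "w = x")
          case True
          then have "adj E' x u" using A uw(1) unfolding adj_def by (auto simp: insert_commute)
          then have uC: "u \<in> (C - {r}) \<union> D" using E'_props(4) unfolding children_def by auto
          have uD: "u \<notin> D" using A True by (auto simp: insert_commute)
          obtain c where c: "c \<in> D" "(adj (avoid E' x))\<^sup>*\<^sup>* c u" using uh unfolding hanging_vertices_def by blast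
          have "u = c" using no_cycle_children[OF E'_props(3) \<open>adj E' x u\<close> _ c(2)] d_facts[OF c(1)] by blast
          then show ?thesis using uD c(1) by simp
        next
          case False
          have ux: "u \<noteq> x" using uh x_notin_hanging[OF xD] by auto
          have "adj (avoid E' x) u w" using A uw(1) ux False unfolding adj_def by auto
          then show ?thesis using uh unfolding Z_def hanging_vertices_def
            by (auto intro: rtranclp.rtrancl_into_rtrancl)
        qed
      next
        assume "\<exists>d\<in>D. {u,w} = {r,d} \<and> kap x r ` {u,w} = {x,d}"
        then obtain d where d: "d \<in> D" "{u,w} = {r,d}" by blast
        then have "(u = r \<and> w = d) \<or> (u = d \<and> w = r)" by (auto simp: doubleton_eq_iff)
        then show ?thesis
        proof
          assume "u = r \<and> w = d"
          then show ?thesis using d(1) unfolding Z_def hanging_vertices_def by auto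
        next
          assume "u = d \<and> w = r"
          then show ?thesis unfolding Z_def by simp
        qed
      qed
    qed
    have "(a = x \<and> b = r) \<or> (a = r \<and> b = x)" using True by (auto simp: doubleton_eq_iff)
    then have "(adj (Xp - {{x,r}}))\<^sup>*\<^sup>* r x"
    proof
      assume "a = x \<and> b = r"
      then show ?thesis using p True rtranclp_adj_sym by metis
    next
      assume "a = r \<and> b = x"
      then show ?thesis using p True by metis
    qed
    moreover have "r \<in> Z" unfolding Z_def by simp
    ultimately have "x \<in> Z" using rtranclp_closed[of "adj (Xp - {{x,r}})" Z r x] cl by blast
    then show False using xZ by simp
  next
    case False
    let ?k = "kap x r"
    have step: "(adj (E' - {?k ` {a,b}}))\<^sup>*\<^sup>* (?k u) (?k w)" if s: "adj (Xp - {{a,b}}) u w" for u w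
    proof (cases "{u,w} = {x,r}")
      case True
      then have "?k u = ?k w" unfolding kap_def by (auto simp: doubleton_eq_iff)
      then show ?thesis by simp
    next
      case nxr: False
      have uw: "u \<noteq> w" "{u,w} \<in> Xp" "{u,w} \<noteq> {a,b}" using s unfolding adj_def by auto
      have "?k ` {u,w} \<in> E'" using kE[OF uw(2) nxr] .
      moreover have "?k ` {u,w} \<noteq> ?k ` {a,b}" using k_inj[OF uw(2) nxr] ab False uw(3) by blast
      moreover have "?k u \<noteq> ?k w" using kap_neq uw(1) nxr xr' by metis
      ultimately have "adj (E' - {?k ` {a,b}}) (?k u) (?k w)" unfolding adj_def by simp
      then show ?thesis by simp
    qed
    have "(adj (E' - {?k ` {a,b}}))\<^sup>*\<^sup>* (?k a) (?k b)"
      using rtranclp_hom[of "adj (Xp - {{a,b}})" _ ?k, OF step p] .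
    moreover have "?k ` {a,b} \<in> E'" using kE ab False by blast
    moreover have "?k a \<noteq> ?k b" using kap_neq ab False xr' by metis
    ultimately show False using E'_props(3) unfolding acyclic_graph_def by simp
  qed
qed

lemma expand_children: "children Xp x = C"
proof (rule set_eqI)
  fix c
  show "c \<in> children Xp x \<longleftrightarrow> c \<in> C"
  proof
    assume "c \<in> children Xp x"
    then have c: "x \<noteq> c" "{x,c} \<in> Xp" unfolding children_def adj_def by auto
    show "c \<in> C"
    proof (cases "{x,c} = {x,r}")
      case True then show ?thesis using rC by (auto simp: doubleton_eq_iff)
    next
      case False
      from classify[OF c(2) False] show ?thesis
      proof
        assume A: "{x,c} \<in> E' \<and> {x,c} \<notin> (\<lambda>d. {x,d}) ` D \<and> r \<notin> {x,c} \<and> kap x r ` {x,c} = {x,c}"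
        then have "c \<in> (C - {r}) \<union> D" using E'_props(4) c(1) unfolding children_def adj_def by auto
        moreover have "c \<notin> D" using A by auto
        ultimately show ?thesis by auto
      next
        assume "\<exists>d\<in>D. {x,c} = {r,d} \<and> kap x r ` {x,c} = {x,d}"
        then obtain d where "d \<in> D" "{x,c} = {r,d}" by blast
        then show ?thesis using d_facts xr' by (auto simp: doubleton_eq_iff)
      qed
    qed
  next
    assume cC: "c \<in> C"
    show "c \<in> children Xp x"
    proof (cases "c = r")
      case True then show ?thesis using expand_xr xr' unfolding children_def adj_def by simp
    next
      case False
      then have "adj E' x c" using cC E'_props(4) unfolding children_def by auto
      then have e: "{x,c} \<in> E'" "x \<noteq> c" unfolding adj_def by auto
      have "{x,c} \<notin> (\<lambda>d. {x,d}) ` D"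
      proof
        assume "{x,c} \<in> (\<lambda>d. {x,d}) ` D"
        then obtain d where "d \<in> D" "{x,c} = {x,d}" by blast
        then show False using d_facts cC e(2) by (auto simp: doubleton_eq_iff)
      qed
      then have "{x,c} \<in> Xp" using e unfolding expand_def by blast
      then show ?thesis using e(2) unfolding children_def adj_def by simp
    qed
  qed
qed

lemma expand_children_r: "children Xp r - {x} = D"
proof (rule set_eqI)
  fix c
  show "c \<in> children Xp r - {x} \<longleftrightarrow> c \<in> D"
  proof
    assume "c \<in> children Xp r - {x}"
    then have c: "r \<noteq> c" "{r,c} \<in> Xp" "c \<noteq> x" unfolding children_def adj_def by auto
    have ne: "{r,c} \<noteq> {x,r}" using c by (auto simp: doubleton_eq_iff)
    from classify[OF c(2) ne] show "c \<in> D"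
    proof
      assume "{r,c} \<in> E' \<and> {r,c} \<notin> (\<lambda>d. {x,d}) ` D \<and> r \<notin> {r,c} \<and> kap x r ` {r,c} = {r,c}"
      then show ?thesis by simp
    next
      assume "\<exists>d\<in>D. {r,c} = {r,d} \<and> kap x r ` {r,c} = {x,d}"
      then obtain d where "d \<in> D" "{r,c} = {r,d}" by blast
      then show ?thesis using c(1) d_facts by (auto simp: doubleton_eq_iff)
    qed
  next
    assume d: "c \<in> D"
    then show "c \<in> children Xp r - {x}" using expand_rd[OF d] d_facts[OF d]
      unfolding children_def adj_def by auto
  qed
qed

lemma contract_expand: "contract x r Xp = E'"
proof (rule set_eqI)
  fix e
  show "e \<in> contract x r Xp \<longleftrightarrow> e \<in> E'"
  proof
    assume "e \<in> contract x r Xp"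
    then obtain f where f: "f \<in> Xp" "f \<noteq> {x,r}" "e = kap x r ` f" unfolding contract_def by blast
    then show "e \<in> E'" using kE by blast
  next
    assume e: "e \<in> E'"
    show "e \<in> contract x r Xp"
    proof (cases "e \<in> (\<lambda>d. {x,d}) ` D")
      case True
      then obtain d where d: "d \<in> D" "e = {x,d}" by blast
      have "{r,d} \<in> Xp" "{r,d} \<noteq> {x,r}" "kap x r ` {r,d} = {x,d}"
        using expand_rd[OF d(1)] d_facts[OF d(1)] xr' unfolding kap_def by (auto simp: doubleton_eq_iff)
      then show ?thesis unfolding contract_def using d(2) by (metis DiffI image_eqI singletonD)
    next
      case False
      then have "e \<in> Xp" using e unfolding expand_def by blast
      moreover have "r \<notin> e" using r_notin_E'[OF e] .
      moreover then have "e \<noteq> {x,r}" "kap x r ` e = e" unfolding kap_def by auto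
      ultimately show ?thesis unfolding contract_def by (metis DiffI image_eqI singletonD)
    qed
  qed
qed

lemma expand_in: "Xp \<in> tset V x C"
  unfolding tset_def is_tree_def using expand_graph expand_conn expand_acyclic expand_children by simp

end

lemma contract_bij:
  "bij_betw (\<lambda>E. (children E r - {x}, contract x r E)) (tset V x C)
     (SIGMA D:Pow (V - {x} - C). tset (V - {r}) x ((C - {r}) \<union> D))"
proof (rule bij_betw_byWitness[where f' = "\<lambda>(D,E'). expand x r D E'"])
  show "\<forall>a\<in>tset V x C. (\<lambda>(D, E'). expand x r D E') (children a r - {x}, contract x r a) = a"
  proof
    fix E assume "E \<in> tset V x C"
    from expand_contract[OF xV CV rC this]
    show "(\<lambda>(D, E'). expand x r D E') (children E r - {x}, contract x r E) = E"
      by (simp only: case_prod_conv)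
  qed
  show "\<forall>a'\<in>SIGMA D:Pow (V - {x} - C). tset (V - {r}) x (C - {r} \<union> D).
       (children ((\<lambda>(D, E'). expand x r D E') a') r - {x}, contract x r ((\<lambda>(D, E'). expand x r D E') a')) = a'"
  proof
    fix p assume p: "p \<in> (SIGMA D:Pow (V - {x} - C). tset (V - {r}) x (C - {r} \<union> D))"
    obtain D E' where pe: "p = (D, E')" by (cases p)
    have D: "D \<subseteq> V - {x} - C" and E': "E' \<in> tset (V - {r}) x (C - {r} \<union> D)" using p pe by auto
    have 1: "children (expand x r D E') r - {x} = D" by (rule expand_children_r[OF D E'])
    have 2: "contract x r (expand x r D E') = E'" by (rule contract_expand[OF D E'])
    show "(children ((\<lambda>(D, E'). expand x r D E') p) r - {x}, contract x r ((\<lambda>(D, E'). expand x r D E') p)) = p"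
      unfolding pe case_prod_conv 1 2 ..
  qed
  show "(\<lambda>E. (children E r - {x}, contract x r E)) ` tset V x C
    \<subseteq> (SIGMA D:Pow (V - {x} - C). tset (V - {r}) x (C - {r} \<union> D))"
  proof
    fix q assume "q \<in> (\<lambda>E. (children E r - {x}, contract x r E)) ` tset V x C"
    then obtain E where E: "E \<in> tset V x C" "q = (children E r - {x}, contract x r E)" by blast
    show "q \<in> (SIGMA D:Pow (V - {x} - C). tset (V - {r}) x (C - {r} \<union> D))"
      unfolding E(2) using contract_in[OF xV CV rC E(1)] D_sub[OF xV CV rC E(1)] by blast
  qed
  show "(\<lambda>(D, E'). expand x r D E') ` (SIGMA D:Pow (V - {x} - C). tset (V - {r}) x (C - {r} \<union> D))
    \<subseteq> tset V x C"
  proof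
    fix q assume "q \<in> (\<lambda>(D, E'). expand x r D E') ` (SIGMA D:Pow (V - {x} - C). tset (V - {r}) x (C - {r} \<union> D))"
    then obtain D E' where D: "D \<subseteq> V - {x} - C" and E': "E' \<in> tset (V - {r}) x (C - {r} \<union> D)"
      and q: "q = expand x r D E'" by blast
    show "q \<in> tset V x C" unfolding q by (rule expand_in[OF D E'])
  qed
qed

end

lemma tset_finite: "finite V \<Longrightarrow> finite (tset V x C)"
proof -
  assume "finite V"
  moreover have "tset V x C \<subseteq> Pow (Pow V)"
    unfolding tset_def is_tree_def using edges_subset_Pow by blast
  ultimately show ?thesis by (meson finite_Pow_iff finite_subset)
qed

lemma card_recurrence:
  assumes fin: "finite V" and xV: "x \<in> V" and CV: "C \<subseteq> V - {x}" and rC: "r \<in> C"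
  shows "card (tset V x C) = (\<Sum>D\<in>Pow (V - {x} - C). card (tset (V - {r}) x ((C - {r}) \<union> D)))"
proof -
  have "card (tset V x C) = card (SIGMA D:Pow (V - {x} - C). tset (V - {r}) x ((C - {r}) \<union> D))"
    using bij_betw_same_card[OF contract_bij[OF xV CV rC]] .
  also have "\<dots> = (\<Sum>D\<in>Pow (V - {x} - C). card (tset (V - {r}) x ((C - {r}) \<union> D)))"
    using fin tset_finite by (intro card_SigmaI) auto
  finally show ?thesis .
qed

lemma phi_mul:
  assumes "1 \<le> M" "i \<le> M"
  shows "real M * phi M i = real i * real M ^ (M - i)"
proof -
  have p: "phi M i = real i * real M powi (int M - int i - 1)" using assms by (simp add: phi_def)
  have "real M * real M powi (int M - int i - 1) = real M powi (int M - int i - 1 + 1)"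
    using assms by (subst power_int_add_1') auto
  also have "int M - int i - 1 + 1 = int (M - i)" using assms by simp
  finally have "real M * real M powi (int M - int i - 1) = real M ^ (M - i)" by simp
  then show ?thesis using p by (simp add: algebra_simps)
qed

lemma bsum1: "(\<Sum>d\<le>a. real (a choose d) * X ^ (a - d)) = (X + 1) ^ a"
  using binomial_ring[of "1::real" X a] by (simp add: add.commute)

lemma bsum2: "(X + 1) * (\<Sum>d\<le>a. real (a choose d) * real d * X ^ (a - d)) = real a * (X + 1) ^ a"
proof (cases a)
  case 0 then show ?thesis by simp
next
  case (Suc b)
  have "(\<Sum>d\<le>Suc b. real (Suc b choose d) * real d * X ^ (Suc b - d))
      = (\<Sum>d\<le>b. real (Suc b choose Suc d) * real (Suc d) * X ^ (b - d))"
    by (subst sum.atMost_Suc_shift) simp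
  also have "\<dots> = (\<Sum>d\<le>b. real (Suc b) * (real (b choose d) * X ^ (b - d)))"
  proof (rule sum.cong)
    fix d assume "d \<in> {..b}"
    have "Suc d * (Suc b choose Suc d) = Suc b * (b choose d)"
      using binomial_absorption[of d "Suc b"] by simp
    then have "real (Suc b choose Suc d) * real (Suc d) = real (Suc b) * real (b choose d)"
      by (metis of_nat_mult mult.commute)
    then show "real (Suc b choose Suc d) * real (Suc d) * X ^ (b - d) = real (Suc b) * (real (b choose d) * X ^ (b - d))"
      by simp
  qed simp
  also have "\<dots> = real (Suc b) * (X + 1) ^ b" using bsum1[of b X] by (simp add: sum_distrib_left[symmetric])
  finally show ?thesis using Suc by simp
qed

lemma phi_rec:
  assumes N2: "2 \<le> N" and j1: "1 \<le> j" and jN: "j \<le> N"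
  shows "(\<Sum>d\<le>N-j. real (N-j choose d) * phi (N-1) (j-1+d)) = phi N j"
proof -
  define a where "a = N - j"
  define X where "X = real (N-1)"
  have XN: "real N = X + 1" using N2 by (simp add: X_def of_nat_diff)
  have X1: "X \<ge> 1" using N2 by (simp add: X_def)
  have t: "X * phi (N-1) (j-1+d) = (real (j-1) + real d) * X^(a-d)" if "d \<le> a" for d
  proof -
    have "real (N-1) * phi (N-1) (j-1+d) = real (j-1+d) * real (N-1) ^ (N - 1 - (j-1+d))"
      by (rule phi_mul) (use N2 j1 jN that a_def in auto)
    moreover have "N - 1 - (j-1+d) = a - d" using j1 that a_def by auto
    ultimately show ?thesis unfolding X_def by simp
  qed
  have "X * (\<Sum>d\<le>a. real (a choose d) * phi (N-1) (j-1+d))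
      = (\<Sum>d\<le>a. real (a choose d) * (X * phi (N-1) (j-1+d)))"
    by (simp add: sum_distrib_left algebra_simps)
  also have "\<dots> = (\<Sum>d\<le>a. real (j-1) * (real (a choose d) * X^(a-d)) + real (a choose d) * real d * X^(a-d))"
  proof (rule sum.cong)
    fix d assume "d \<in> {..a}"
    then have "X * phi (N-1) (j-1+d) = (real (j-1) + real d) * X^(a-d)" using t by simp
    then show "real (a choose d) * (X * phi (N-1) (j-1+d)) = real (j-1) * (real (a choose d) * X^(a-d)) + real (a choose d) * real d * X^(a-d)"
      by (simp add: algebra_simps)
  qed simp
  also have "\<dots> = real (j-1) * (X+1)^a + (\<Sum>d\<le>a. real (a choose d) * real d * X^(a-d))"
    by (simp add: sum.distrib sum_distrib_left[symmetric] bsum1)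
  finally have L: "X * (\<Sum>d\<le>a. real (a choose d) * phi (N-1) (j-1+d))
      = real (j-1) * (X+1)^a + (\<Sum>d\<le>a. real (a choose d) * real d * X^(a-d))" .
  have "(X+1) * (X * (\<Sum>d\<le>a. real (a choose d) * phi (N-1) (j-1+d)))
      = real (j-1) * (X+1)^(Suc a) + real a * (X+1)^a"
    unfolding L using bsum2[of X a] by (simp add: algebra_simps)
  also have "\<dots> = (X+1)^a * (real (j-1) * (X+1) + real a)" by (simp add: algebra_simps)
  also have "real (j-1) * (X+1) + real a = real j * X"
    using XN j1 jN a_def by (simp add: of_nat_diff algebra_simps)
  also have "(X+1)^a * (real j * X) = X * (real N * phi N j)"
    using phi_mul[of N j] N2 jN XN a_def by (simp add: algebra_simps)
  finally have "(X+1) * (X * (\<Sum>d\<le>a. real (a choose d) * phi (N-1) (j-1+d))) = (X+1) * (X * phi N j)"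
    using XN by (simp add: algebra_simps)
  then have "(\<Sum>d\<le>a. real (a choose d) * phi (N-1) (j-1+d)) = phi N j"
    using X1 by simp
  then show ?thesis unfolding a_def .
qed

lemma phi_rec1: "(\<Sum>d\<le>1-1. real (1-1 choose d) * phi (1-1) (1-1+d)) = phi 1 1"
  by (simp add: phi_def)

lemma sum_Pow_card:
  assumes "finite A"
  shows "(\<Sum>D\<in>Pow A. g (card D)) = (\<Sum>d\<le>card A. real (card A choose d) * (g d :: real))"
proof -
  have "(\<Sum>D\<in>Pow A. g (card D)) = (\<Sum>d\<in>{..card A}. \<Sum>D\<in>{D\<in>Pow A. card D = d}. g (card D))"
    by (rule sum.group[symmetric]) (use assms card_mono in auto)
  also have "\<dots> = (\<Sum>d\<le>card A. real (card A choose d) * g d)"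
  proof (rule sum.cong)
    fix d
    have "{D\<in>Pow A. card D = d} = {B. B \<subseteq> A \<and> card B = d}" by auto
    then have c: "card {D\<in>Pow A. card D = d} = card A choose d" using n_subsets[OF assms] by simp
    have "(\<Sum>D\<in>{D\<in>Pow A. card D = d}. g (card D)) = (\<Sum>D\<in>{D\<in>Pow A. card D = d}. g d)"
      by (rule sum.cong) auto
    also have "\<dots> = real (card A choose d) * g d" using c by simp
    finally show "(\<Sum>D\<in>{D\<in>Pow A. card D = d}. g (card D)) = real (card A choose d) * g d" .
  qed simp
  finally show ?thesis .
qed

lemma phi_rec':
  assumes N1: "1 \<le> N" and j1: "1 \<le> j" and jN: "j \<le> N"
  shows "(\<Sum>d\<le>N-j. real (N-j choose d) * phi (N-1) (j-1+d)) = phi N j"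
proof (cases "N = 1")
  case True
  then have "j = 1" using j1 jN by simp
  then show ?thesis using True by (simp add: phi_def)
qed (use phi_rec assms in auto)

lemma tset_single: "tset {x} x {} = {{}}"
proof (rule set_eqI)
  fix E
  show "E \<in> tset {x} x {} \<longleftrightarrow> E \<in> {{}}"
  proof
    assume "E \<in> tset {x} x {}"
    then have g: "is_graph {x} E" unfolding tset_def is_tree_def by auto
    have "E = {}"
    proof (rule ccontr)
      assume "E \<noteq> {}"
      then obtain e where "e \<in> E" by blast
      then obtain a b where "a \<noteq> b" "a \<in> {x}" "b \<in> {x}" by (rule graph_edgeE[OF g])
      then show False by simp
    qed
    then show "E \<in> {{}}" by simp
  next
    assume "E \<in> {{}}"
    then have E: "E = {}" by simp
    have "adj {} a b = False" for a b unfolding adj_def by simp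
    then have "children {} x = {}" unfolding children_def by simp
    moreover have "is_graph {x} {}" unfolding is_graph_def by simp
    moreover have "connected_graph {x} {}" unfolding connected_graph_def by simp
    moreover have "acyclic_graph {}" unfolding acyclic_graph_def by simp
    ultimately show "E \<in> tset {x} x {}" unfolding E tset_def is_tree_def by simp
  qed
qed

lemma tset_none:
  assumes "x \<in> V" "v \<in> V" "v \<noteq> x"
  shows "tset V x {} = {}"
proof (rule ccontr)
  assume "tset V x {} \<noteq> {}"
  then obtain E where E: "E \<in> tset V x {}" by blast
  then have "connected_graph V E" "children E x = {}" unfolding tset_def is_tree_def by auto
  then have "v \<in> hanging_vertices E x {}" using hanging_all[of V E x v] assms by metis
  then show False unfolding hanging_vertices_def by simp
qed

theorem tree_count:
  assumes "finite V" "x \<in> V" "C \<subseteq> V - {x}"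
  shows "real (card (tset V x C)) = phi (card V - 1) (card C)"
  using assms
proof (induction "card V" arbitrary: V C rule: less_induct)
  case less
  note fin = less.prems(1) and xV = less.prems(2) and CV = less.prems(3)
  show ?case
  proof (cases "C = {}")
    case True
    show ?thesis
    proof (cases "V = {x}")
      case True
      then show ?thesis using \<open>C = {}\<close> tset_single by (simp add: phi_def)
    next
      case False
      then obtain v where v: "v \<in> V" "v \<noteq> x" using xV by blast
      have "card {x, v} \<le> card V" using v xV fin by (intro card_mono) auto
      then have "card V \<ge> 2" using v by simp
      then show ?thesis using \<open>C = {}\<close> tset_none[OF xV v] by (simp add: phi_def)
    qed
  next
    case False
    then obtain r where rC: "r \<in> C" by blast
    have rV: "r \<in> V" "r \<noteq> x" using rC CV by auto
    define A where "A = V - {x} - C"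
    define N where "N = card V - 1"
    define j where "j = card C"
    have finC: "finite C" using CV fin finite_subset by blast
    have cVr: "card (V - {r}) = N" using rV fin unfolding N_def by simp
    have "card {x, r} \<le> card V" using rV xV fin by (intro card_mono) auto
    then have N1: "1 \<le> N" using rV unfolding N_def by simp
    have j1: "1 \<le> j" using rC finC unfolding j_def by (metis One_nat_def Suc_leI card_gt_0_iff empty_iff)
    have "card C \<le> card (V - {x})" using CV fin by (intro card_mono) auto
    then have jN: "j \<le> N" using xV fin unfolding j_def N_def by simp
    have cA: "card A = N - j" unfolding A_def N_def j_def
      using CV fin xV by (simp add: card_Diff_subset finite_subset)
    have finA: "finite A" unfolding A_def using fin by simp
    have each: "real (card (tset (V - {r}) x ((C - {r}) \<union> D))) = phi (N - 1) (j - 1 + card D)"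
      if D: "D \<in> Pow A" for D
    proof -
      have "card (V - {r}) < card V" using rV fin by (meson card_Diff1_less)
      moreover have "(C - {r}) \<union> D \<subseteq> V - {r} - {x}" using D CV rV rC unfolding A_def by auto
      ultimately have "real (card (tset (V - {r}) x ((C - {r}) \<union> D))) = phi (card (V - {r}) - 1) (card ((C - {r}) \<union> D))"
        using less.hyps[of "V - {r}" "(C - {r}) \<union> D"] fin xV rV by auto
      moreover have "card ((C - {r}) \<union> D) = j - 1 + card D"
      proof -
        have "finite D" using D finA finite_subset by auto
        moreover have "(C - {r}) \<inter> D = {}" using D unfolding A_def by auto
        ultimately have "card ((C - {r}) \<union> D) = card (C - {r}) + card D" using finC by (simp add: card_Un_disjoint)
        then show ?thesis using rC finC unfolding j_def by simp
      qed
      ultimately show ?thesis using cVr by simp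
    qed
    have "real (card (tset V x C)) = (\<Sum>D\<in>Pow A. real (card (tset (V - {r}) x ((C - {r}) \<union> D))))"
      using card_recurrence[OF fin xV CV rC] unfolding A_def by simp
    also have "\<dots> = (\<Sum>D\<in>Pow A. phi (N - 1) (j - 1 + card D))"
      using each by (rule sum.cong[OF refl])
    also have "\<dots> = (\<Sum>d\<le>card A. real (card A choose d) * phi (N - 1) (j - 1 + d))"
      by (rule sum_Pow_card[OF finA])
    also have "\<dots> = phi N j" unfolding cA by (rule phi_rec'[OF N1 j1 jN])
    finally show ?thesis unfolding N_def j_def .
  qed
qed

lemma upper_vandermonde: "(\<Sum>i\<le>n. (i choose k) * ((n - i) choose l)) = Suc n choose (k + l + 1)"
proof (induction n arbitrary: l)
  case 0
  then show ?case by (cases k; cases l) auto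
next
  case (Suc n)
  show ?case
  proof (cases l)
    case 0
    then show ?thesis using sum_choose_upper[of k "Suc n"] by (simp del: sum.atMost_Suc)
  next
    case (Suc l')
    have "(\<Sum>i\<le>Suc n. (i choose k) * ((Suc n - i) choose l))
        = (\<Sum>i\<le>n. (i choose k) * ((Suc n - i) choose l))"
      using Suc by simp
    also have "\<dots> = (\<Sum>i\<le>n. (i choose k) * ((n - i) choose l') + (i choose k) * ((n - i) choose l))"
    proof (rule sum.cong)
      fix i assume "i \<in> {..n}"
      then have "Suc n - i = Suc (n - i)" by auto
      then show "(i choose k) * ((Suc n - i) choose l) = (i choose k) * ((n - i) choose l') + (i choose k) * ((n - i) choose l)"
        using Suc by (simp add: algebra_simps)
    qed simp
    also have "\<dots> = (Suc n choose (k + l' + 1)) + (Suc n choose (k + l + 1))"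
      by (simp add: sum.distrib Suc.IH)
    also have "\<dots> = Suc (Suc n) choose (k + l + 1)" using Suc by simp
    finally show ?thesis .
  qed
qed

lemma upper_vandermonde': "(\<Sum>i=1..n+1. ((i - 1) choose k) * ((n + 1 - i) choose l)) = (n + 1) choose (k + l + 1)"
proof -
  have "(\<Sum>i=1..n+1. ((i - 1) choose k) * ((n + 1 - i) choose l)) = (\<Sum>i=0..n. (i choose k) * ((n - i) choose l))"
    using sum.shift_bounds_cl_Suc_ivl[of "\<lambda>i. ((i - 1) choose k) * ((n + 1 - i) choose l)" 0 n] by simp
  also have "\<dots> = (\<Sum>i\<le>n. (i choose k) * ((n - i) choose l))" by (simp add: atMost_atLeast0)
  finally show ?thesis using upper_vandermonde by simp
qed

lemma card_Ss:
  assumes fin: "finite W" and CsW: "Cs \<subseteq> W" and km: "card Cs \<le> m"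
  shows "card {S. Cs \<subseteq> S \<and> S \<subseteq> W \<and> card S = m} = (card W - card Cs) choose (m - card Cs)"
proof -
  have finCs: "finite Cs" using fin CsW finite_subset by blast
  have "bij_betw (\<lambda>S. S - Cs) {S. Cs \<subseteq> S \<and> S \<subseteq> W \<and> card S = m} {S'. S' \<subseteq> W - Cs \<and> card S' = m - card Cs}"
  proof (rule bij_betw_byWitness[where f' = "\<lambda>S'. S' \<union> Cs"])
    show "\<forall>a\<in>{S. Cs \<subseteq> S \<and> S \<subseteq> W \<and> card S = m}. a - Cs \<union> Cs = a" by auto
    show "\<forall>a'\<in>{S'. S' \<subseteq> W - Cs \<and> card S' = m - card Cs}. a' \<union> Cs - Cs = a'" by auto
    show "(\<lambda>S. S - Cs) ` {S. Cs \<subseteq> S \<and> S \<subseteq> W \<and> card S = m} \<subseteq> {S'. S' \<subseteq> W - Cs \<and> card S' = m - card Cs}"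
    proof
      fix q assume "q \<in> (\<lambda>S. S - Cs) ` {S. Cs \<subseteq> S \<and> S \<subseteq> W \<and> card S = m}"
      then obtain S where S: "Cs \<subseteq> S" "S \<subseteq> W" "card S = m" "q = S - Cs" by blast
      have "finite S" using S(2) fin finite_subset by blast
      then have "card (S - Cs) = m - card Cs" using S by (simp add: card_Diff_subset finCs)
      then show "q \<in> {S'. S' \<subseteq> W - Cs \<and> card S' = m - card Cs}" using S by auto
    qed
    show "(\<lambda>S'. S' \<union> Cs) ` {S'. S' \<subseteq> W - Cs \<and> card S' = m - card Cs} \<subseteq> {S. Cs \<subseteq> S \<and> S \<subseteq> W \<and> card S = m}"
    proof
      fix q assume "q \<in> (\<lambda>S'. S' \<union> Cs) ` {S'. S' \<subseteq> W - Cs \<and> card S' = m - card Cs}"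
      then obtain S' where S': "S' \<subseteq> W - Cs" "card S' = m - card Cs" "q = S' \<union> Cs" by blast
      have "finite S'" using S'(1) fin finite_subset by blast
      moreover have "S' \<inter> Cs = {}" using S'(1) by auto
      ultimately have "card (S' \<union> Cs) = m - card Cs + card Cs" using S'(2) finCs by (simp add: card_Un_disjoint)
      then have "card (S' \<union> Cs) = m" using km by simp
      then show "q \<in> {S. Cs \<subseteq> S \<and> S \<subseteq> W \<and> card S = m}" using S' CsW by auto
    qed
  qed
  then have "card {S. Cs \<subseteq> S \<and> S \<subseteq> W \<and> card S = m} = card {S'. S' \<subseteq> W - Cs \<and> card S' = m - card Cs}"
    by (rule bij_betw_same_card)
  also have "\<dots> = card (W - Cs) choose (m - card Cs)" using fin by (simp add: n_subsets)
  also have "card (W - Cs) = card W - card Cs" using CsW finCs by (simp add: card_Diff_subset)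
  finally show ?thesis .
qed

lemma is_graph_subset: "is_graph V E \<Longrightarrow> E' \<subseteq> E \<Longrightarrow> is_graph V E'"
  unfolding is_graph_def by (meson subsetD)

context
  fixes n i k l m :: nat
  assumes i1: "1 \<le> i" and i2: "i \<le> n + 1" and km: "k \<le> m"
begin

abbreviation "VV \<equiv> {1..n+1}"

definition Csf :: "nat set set \<Rightarrow> nat set" where "Csf E = {c\<in>children E i. c < i}"
definition Clf :: "nat set set \<Rightarrow> nat set" where "Clf E = {c\<in>children E i. c > i}"

definition P12 :: "(nat set \<times> nat set) set" where
  "P12 = {Cs. Cs \<subseteq> {1..<i} \<and> card Cs = k} \<times> {Cl. Cl \<subseteq> {i<..n+1} \<and> card Cl = l}"

definition Ss :: "nat set \<Rightarrow> nat set \<Rightarrow> nat set set" where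
  "Ss Cs Cl = {S. Cs \<subseteq> S \<and> S \<subseteq> VV - {i} - Cl \<and> card S = m}"

definition Idx :: "((nat set \<times> nat set) \<times> nat set) set" where
  "Idx = (SIGMA p:P12. Ss (fst p) (snd p))"

definition Fam :: "(nat set \<times> nat set) \<times> nat set \<Rightarrow> nat set set set" where
  "Fam q = splitset VV i (fst (fst q)) (snd (fst q)) (snd q)"

definition Good :: "nat set set set" where
  "Good = {E. is_tree VV E \<and> card (Csf E) = k \<and> card (Clf E) = l \<and> card (hanging_vertices E i (Csf E)) = m}"

lemma iV: "i \<in> VV" using i1 i2 by simp

lemma Idx_mem: "((Cs,Cl),S) \<in> Idx \<longleftrightarrow> Cs \<subseteq> {1..<i} \<and> card Cs = k \<and> Cl \<subseteq> {i<..n+1} \<and> card Cl = l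
   \<and> Cs \<subseteq> S \<and> S \<subseteq> VV - {i} - Cl \<and> card S = m"
  unfolding Idx_def P12_def Ss_def by auto

lemma Good_image: "(\<lambda>E. (((Csf E, Clf E), hanging_vertices E i (Csf E)), E)) ` Good = (SIGMA q:Idx. Fam q)"
proof (rule set_eqI)
  fix z :: "((nat set \<times> nat set) \<times> nat set) \<times> nat set set"
  obtain Cs Cl S E where z: "z = (((Cs,Cl),S),E)" by (metis prod.exhaust)
  show "z \<in> (\<lambda>E. (((Csf E, Clf E), hanging_vertices E i (Csf E)), E)) ` Good \<longleftrightarrow> z \<in> (SIGMA q:Idx. Fam q)"
  proof
    assume "z \<in> (\<lambda>E. (((Csf E, Clf E), hanging_vertices E i (Csf E)), E)) ` Good"
    then have E: "E \<in> Good" and eqs: "Cs = Csf E" "Cl = Clf E" "S = hanging_vertices E i (Csf E)"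
      using z by auto
    have tr: "is_tree VV E" and cards: "card Cs = k" "card Cl = l" "card S = m"
      using E eqs unfolding Good_def by auto
    have g: "is_graph VV E" and ac: "acyclic_graph E" using tr unfolding is_tree_def by auto
    have chV: "children E i \<subseteq> VV - {i}" using children_sub[OF g] .
    have Cs1: "Cs \<subseteq> {1..<i}" using chV unfolding eqs Csf_def by auto
    have Cl1: "Cl \<subseteq> {i<..n+1}" using chV unfolding eqs Clf_def by auto
    have ch: "children E i = Cs \<union> Cl" using chV unfolding eqs Csf_def Clf_def by auto
    have hS: "S = hanging_vertices E i Cs" using eqs by simp
    have CsS: "Cs \<subseteq> S" unfolding hS hanging_vertices_def by auto
    have iCs: "i \<notin> Cs" unfolding eqs Csf_def by auto
    have SV: "S \<subseteq> VV"
    proof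
      fix v assume "v \<in> S"
      then have "v \<in> hanging_vertices E i Cs" using hS by simp
      then have "\<exists>c\<in>Cs. (adj (avoid E i))\<^sup>*\<^sup>* c v" unfolding hanging_vertices_def by simp
      then obtain c where c: "c \<in> Cs" "(adj (avoid E i))\<^sup>*\<^sup>* c v" by (elim bexE) simp
      have "is_graph VV (avoid E i)" by (rule is_graph_subset[OF g]) auto
      moreover have "c \<in> VV" using c(1) ch chV by auto
      ultimately show "v \<in> VV" using rtranclp_in_V c(2) by metis
    qed
    have iS: "i \<notin> S" unfolding hS using x_notin_hanging iCs by metis
    have ClS: "Cl \<inter> S = {}"
    proof (rule ccontr)
      assume "Cl \<inter> S \<noteq> {}"
      then obtain c where c: "c \<in> Cl" "c \<in> S" by blast
      have "c \<in> hanging_vertices E i Cs" using c(2) hS by simp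
      then obtain c' where c': "c' \<in> Cs" "(adj (avoid E i))\<^sup>*\<^sup>* c' c" unfolding hanging_vertices_def by blast
      have "adj E i c" "adj E i c'" using c(1) c'(1) ch unfolding children_def by auto
      then have "c = c'" using no_cycle_children[OF ac _ _ c'(2)] by blast
      then show False using subsetD[OF Cs1 c'(1)] subsetD[OF Cl1 c(1)] by auto
    qed
    have "((Cs,Cl),S) \<in> Idx" unfolding Idx_mem using Cs1 Cl1 cards CsS SV iS ClS by auto
    moreover have "E \<in> Fam ((Cs,Cl),S)" unfolding Fam_def splitset_def using tr ch eqs by simp
    ultimately show "z \<in> (SIGMA q:Idx. Fam q)" using z by simp
  next
    assume "z \<in> (SIGMA q:Idx. Fam q)"
    then have I: "((Cs,Cl),S) \<in> Idx" and F: "E \<in> Fam ((Cs,Cl),S)" using z by auto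
    have idx: "Cs \<subseteq> {1..<i}" "card Cs = k" "Cl \<subseteq> {i<..n+1}" "card Cl = l" "card S = m"
      using I unfolding Idx_mem by auto
    have tr: "is_tree VV E" and ch: "children E i = Cs \<union> Cl" and h: "hanging_vertices E i Cs = S"
      using F unfolding Fam_def splitset_def by auto
    have e1: "Csf E = Cs" unfolding Csf_def ch using idx by auto
    have e2: "Clf E = Cl" unfolding Clf_def ch using idx by auto
    have "E \<in> Good" unfolding Good_def using tr e1 e2 h idx by simp
    moreover have "z = (((Csf E, Clf E), hanging_vertices E i (Csf E)), E)" using z e1 e2 h by simp
    ultimately show "z \<in> (\<lambda>E. (((Csf E, Clf E), hanging_vertices E i (Csf E)), E)) ` Good" by blast
  qed
qed

lemma finite_Idx: "finite Idx"
proof -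
  have "Idx \<subseteq> (Pow VV \<times> Pow VV) \<times> Pow VV" unfolding Idx_def P12_def Ss_def using i2 by auto
  moreover have "finite ((Pow VV \<times> Pow VV) \<times> Pow VV)" by simp
  ultimately show ?thesis using finite_subset by blast
qed

lemma finite_Fam: "finite (Fam q)"
proof -
  have "Fam q \<subseteq> Pow (Pow VV)" unfolding Fam_def splitset_def is_tree_def using edges_subset_Pow by blast
  then show ?thesis using finite_subset by (metis finite_Pow_iff finite_atLeastAtMost)
qed

lemma card_Good: "card Good = (\<Sum>q\<in>Idx. card (Fam q))"
proof -
  have "inj_on (\<lambda>E. (((Csf E, Clf E), hanging_vertices E i (Csf E)), E)) Good"
    by (rule inj_onI) simp
  then have "card Good = card ((\<lambda>E. (((Csf E, Clf E), hanging_vertices E i (Csf E)), E)) ` Good)"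
    by (simp add: card_image)
  also have "\<dots> = card (SIGMA q:Idx. Fam q)" unfolding Good_image ..
  also have "\<dots> = (\<Sum>q\<in>Idx. card (Fam q))" using finite_Idx finite_Fam by simp
  finally show ?thesis .
qed

lemma card_Fam:
  assumes q: "q \<in> Idx"
  shows "real (card (Fam q)) = phi m k * phi (n - m) l"
proof -
  obtain Cs Cl S where qe: "q = ((Cs,Cl),S)" by (metis prod.exhaust)
  have idx: "Cs \<subseteq> {1..<i}" "card Cs = k" "Cl \<subseteq> {i<..n+1}" "card Cl = l" "Cs \<subseteq> S" "S \<subseteq> VV - {i} - Cl" "card S = m"
    using q unfolding qe Idx_mem by auto
  have "card (Fam q) = card (tset (insert i S) i Cs \<times> tset (VV - S) i Cl)"
    unfolding qe Fam_def using bij_betw_same_card[OF split_bij[OF iV idx(5) idx(6)]] by simp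
  also have "\<dots> = card (tset (insert i S) i Cs) * card (tset (VV - S) i Cl)" by (rule card_cartesian_product)
  finally have c: "card (Fam q) = card (tset (insert i S) i Cs) * card (tset (VV - S) i Cl)" .
  have finS: "finite S" using idx(6) finite_subset by blast
  have iS: "i \<notin> S" using idx(6) by auto
  have t1: "real (card (tset (insert i S) i Cs)) = phi m k"
  proof -
    have "real (card (tset (insert i S) i Cs)) = phi (card (insert i S) - 1) (card Cs)"
      by (rule tree_count) (use finS idx(5) iS in auto)
    then show ?thesis using finS iS idx by simp
  qed
  have t2: "real (card (tset (VV - S) i Cl)) = phi (n - m) l"
  proof -
    have "Cl \<subseteq> VV - S - {i}" using idx(3,6) by auto
    then have "real (card (tset (VV - S) i Cl)) = phi (card (VV - S) - 1) (card Cl)"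
      by (intro tree_count) (use iV iS in auto)
    moreover have "card (VV - S) = n + 1 - m"
    proof -
      have "S \<subseteq> VV" using idx(6) by blast
      then have "card (VV - S) = card VV - card S" using finS by (simp add: card_Diff_subset)
      then show ?thesis using idx(7) by simp
    qed
    ultimately show ?thesis using idx by simp
  qed
  show ?thesis using c t1 t2 by simp
qed

lemma card_Idx:
  assumes "l \<le> n - k"
  shows "card Idx = ((i - 1) choose k) * ((n + 1 - i) choose l) * ((n - k - l) choose (m - k))"
proof -
  have eachS: "card (Ss (fst p) (snd p)) = (n - k - l) choose (m - k)" if p: "p \<in> P12" for p
  proof -
    obtain Cs Cl where pe: "p = (Cs,Cl)" by (metis prod.exhaust)
    have pp: "Cs \<subseteq> {1..<i}" "card Cs = k" "Cl \<subseteq> {i<..n+1}" "card Cl = l" using p unfolding pe P12_def by auto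
    have W: "Cs \<subseteq> VV - {i} - Cl"
    proof
      fix c assume c: "c \<in> Cs"
      then have "c \<in> {1..<i}" using pp(1) by blast
      moreover have "c \<notin> Cl" using pp(3) \<open>c \<in> {1..<i}\<close> by auto
      ultimately show "c \<in> VV - {i} - Cl" using i2 by auto
    qed
    have "card Cl \<le> card (VV - {i})" using pp(3) by (intro card_mono) auto
    have cW: "card (VV - {i} - Cl) = n - l"
    proof -
      have "Cl \<subseteq> VV - {i}" using pp(3) by auto
      then have "card (VV - {i} - Cl) = card (VV - {i}) - card Cl"
        by (meson card_Diff_subset finite_Diff finite_atLeastAtMost finite_subset)
      then show ?thesis using iV pp(4) by simp
    qed
    have "card (Ss Cs Cl) = (card (VV - {i} - Cl) - card Cs) choose (m - card Cs)"
      unfolding Ss_def by (rule card_Ss) (use W pp km in auto)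
    then show ?thesis using cW pp pe by (simp add: diff_diff_left add.commute)
  qed
  have fin: "finite P12" unfolding P12_def by (rule finite_cartesian_product) (auto intro: finite_subset)
  have "card Idx = (\<Sum>p\<in>P12. card (Ss (fst p) (snd p)))"
    unfolding Idx_def using fin by (intro card_SigmaI) (auto simp: Ss_def intro: finite_subset)
  also have "\<dots> = card P12 * ((n - k - l) choose (m - k))" using eachS by simp
  also have "card P12 = ((i - 1) choose k) * ((n + 1 - i) choose l)"
  proof -
    have "card {Cs. Cs \<subseteq> {1..<i} \<and> card Cs = k} = (i - 1) choose k" using n_subsets[of "{1..<i}" k] by simp
    moreover have "card {Cl. Cl \<subseteq> {i<..n+1} \<and> card Cl = l} = (n + 1 - i) choose l" using n_subsets[of "{i<..n+1}" l] by simp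
    ultimately show ?thesis unfolding P12_def by (simp add: card_cartesian_product)
  qed
  finally show ?thesis .
qed

lemma T_eq:
  assumes "l \<le> n - k"
  shows "real (T n i k l m) = real (((i - 1) choose k) * ((n + 1 - i) choose l) * ((n - k - l) choose (m - k))) * phi m k * phi (n - m) l"
proof -
  have "T n i k l m = card Good" unfolding T_def Good_def Csf_def Clf_def by simp
  then have "real (T n i k l m) = (\<Sum>q\<in>Idx. real (card (Fam q)))" using card_Good by simp
  also have "\<dots> = (\<Sum>q\<in>Idx. phi m k * phi (n - m) l)" using card_Fam by (rule sum.cong[OF refl])
  also have "\<dots> = real (card Idx) * (phi m k * phi (n - m) l)" by simp
  finally show ?thesis using card_Idx[OF assms] by simp
qed

end

theorem mainTheorem3:
  fixes n k l m :: nat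
  assumes "n \<ge> 1" "k \<le> n" "l \<le> n - k" "k \<le> m" "m \<le> n - l"
  shows "real (\<Sum>i=1..n+1. T n i k l m)
           = real ((n+1) choose (k+l+1)) * real ((n-k-l) choose (m-k)) * phi m k * phi (n-m) l"
proof -
  have "real (\<Sum>i=1..n+1. T n i k l m) = (\<Sum>i=1..n+1. real (T n i k l m))" by simp
  also have "\<dots> = (\<Sum>i=1..n+1. real (((i - 1) choose k) * ((n + 1 - i) choose l)) * (real ((n - k - l) choose (m - k)) * phi m k * phi (n - m) l))"
  proof (rule sum.cong[OF refl])
    fix i assume "i \<in> {1..n+1}"
    then show "real (T n i k l m) = real (((i - 1) choose k) * ((n + 1 - i) choose l)) * (real ((n - k - l) choose (m - k)) * phi m k * phi (n - m) l)"
      using T_eq[of i n k m l] assms by (simp add: algebra_simps)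
  qed
  also have "\<dots> = real (\<Sum>i=1..n+1. ((i - 1) choose k) * ((n + 1 - i) choose l)) * (real ((n - k - l) choose (m - k)) * phi m k * phi (n - m) l)"
    by (simp add: sum_distrib_right del: sum.cl_ivl_Suc)
  also have "(\<Sum>i=1..n+1. ((i - 1) choose k) * ((n + 1 - i) choose l)) = (n+1) choose (k+l+1)"
    by (rule upper_vandermonde')
  finally show ?thesis by (simp add: algebra_simps)
qed

end
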